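(* For every $n\ge1$, \[\widehat C_n=F(X_0,\dots,X_{n-2})+\frac{(-1)^{n-1}}{(n-1)!}X_{n-1},\] where $F$ is a polynomial with rational coefficients (depending on $n$) of total degree at most $n$.
   Context: Polynomials $S_i(n)$: let $a_0,a_1,\dots$ be indeterminates, $a(x)=\sum_{i\ge0}a_ix^i$; for a positive integer $j$ set $G(x)=\prod_{i=0}^{j-1}\frac{1+a(x)x^2}{1+ix}$, $H(x)=\prod_{i=1-j}^{-1}\frac{1+ix}{1+a(x)x^2}$, $u=2j-1$, $v=j(j-1)$. For each $n\ge1$ there are unique $S_0(n),\dots,S_n(n)\in\mathbb{Q}[a_0,\dots,a_{n-2}]$, independent of $j$, with: for every positive integer $j$ the coefficient of $x^{n-1}$ in $\frac{G(x)-H(x)}{x^2}(1+a(x)x^2)$ equals $u(a_{n-1}+S_0(n)+\sum_{i=1}^nS_i(n)v^i)$. Write $S_i(n)(c_1,\dots,c_{n-1})$ for the substitution $a_k=c_{k+1}$. Recursion: $X_0,X_1,\dots$ are indeterminates, $D$ is the $\mathbb{Q}$-linear derivation of $\mathbb{Q}[X_0,X_1,\dots]$ with $D(X_k)=X_{k+1}$, $P_1=X_0$, $P_{m+1}=D(P_m)-3X_0P_m$, and for $m\ge1$ \[\widehat C_m=-S_0(m)(\widehat C_1,\dots,\widehat C_{m-1})+\sum_{i=1}^m3\cdot2^iS_i(m)(\widehat C_1,\dots,\widehat C_{m-1})P_i.\] *)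

theory Defs
  imports "HOL-Library.Poly_Mapping" "HOL-Computational_Algebra.Formal_Power_Series"
begin

text \<open>Variable k stands for the indeterminate with index k
  (X_k, resp. a_k).\<close>

type_synonym qpoly = "(nat \<Rightarrow>\<^sub>0 nat) \<Rightarrow>\<^sub>0 rat"

definition mvar :: "nat \<Rightarrow> qpoly" where
  "mvar k = Poly_Mapping.single (Poly_Mapping.single k 1) 1"

definition mconst :: "rat \<Rightarrow> qpoly" where
  "mconst c = Poly_Mapping.single 0 c"

definition mvars :: "qpoly \<Rightarrow> nat set" where
  "mvars p = \<Union> (Poly_Mapping.keys ` Poly_Mapping.keys p)"

text \<open>Total degree (0 for the zero polynomial).\<close>
definition mtotal_degree :: "qpoly \<Rightarrow> nat" where
  "mtotal_degree p = Max (insert 0 ((\<lambda>m. sum (Poly_Mapping.lookup m) (Poly_Mapping.keys m)) ` Poly_Mapping.keys p))"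

definition meval :: "(nat \<Rightarrow> qpoly) \<Rightarrow> qpoly \<Rightarrow> qpoly" where
  "meval f p = (\<Sum>m\<in>Poly_Mapping.keys p. mconst (Poly_Mapping.lookup p m) * (\<Prod>k\<in>Poly_Mapping.keys m. f k ^ Poly_Mapping.lookup m k))"

text \<open>The Q-linear derivation D with D(X_k) = X_(k+1), written out on monomials
  via the Leibniz rule.\<close>
definition mderiv :: "qpoly \<Rightarrow> qpoly" where
  "mderiv p = (\<Sum>m\<in>Poly_Mapping.keys p. mconst (Poly_Mapping.lookup p m) *
      (\<Sum>k\<in>Poly_Mapping.keys m. of_nat (Poly_Mapping.lookup m k) * mvar (Suc k) * mvar k ^ (Poly_Mapping.lookup m k - 1) *
          (\<Prod>k'\<in>Poly_Mapping.keys m - {k}. mvar k' ^ Poly_Mapping.lookup m k')))"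

definition finv :: "qpoly fps \<Rightarrow> qpoly fps" where
  "finv f = fps_right_inverse f 1"

text \<open>a(x) = sum a_i x^i, with a_i the indeterminate mvar i.\<close>
definition afps :: "qpoly fps" where
  "afps = Abs_fps mvar"

definition Aser :: "qpoly fps" where
  "Aser = 1 + afps * fps_X ^ 2"

definition onepl :: "int \<Rightarrow> qpoly fps" where
  "onepl i = 1 + fps_const (of_int i) * fps_X"

definition Gser :: "int \<Rightarrow> qpoly fps" where
  "Gser j = (\<Prod>i\<in>{0..j-1}. Aser * finv (onepl i))"

definition Hser :: "int \<Rightarrow> qpoly fps" where
  "Hser j = (\<Prod>i\<in>{1-j..-1}. onepl i * finv Aser)"

definition GHcoeff :: "int \<Rightarrow> nat \<Rightarrow> qpoly" where
  "GHcoeff j n = fps_nth (fps_shift 2 (Gser j - Hser j) * Aser) (n - 1)"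

text \<open>S i stands for S_i(n) (and is 0 for i > n).\<close>
definition S_spec :: "nat \<Rightarrow> (nat \<Rightarrow> qpoly) \<Rightarrow> bool" where
  "S_spec n S \<longleftrightarrow> (\<forall>i>n. S i = 0) \<and> (\<forall>i\<le>n. mvars (S i) \<subseteq> {..<n-1}) \<and>
     (\<forall>j::int. j \<ge> 1 \<longrightarrow>
        GHcoeff j n = of_int (2*j - 1) *
          (mvar (n-1) + S 0 + (\<Sum>i=1..n. S i * of_int (j*(j-1)) ^ i)))"

definition Spoly :: "nat \<Rightarrow> nat \<Rightarrow> qpoly" where
  "Spoly n = (THE S. S_spec n S)"

fun Ppoly :: "nat \<Rightarrow> qpoly" where
  "Ppoly 0 = 0"
| "Ppoly (Suc 0) = mvar 0"
| "Ppoly (Suc (Suc m)) = mderiv (Ppoly (Suc m)) - 3 * mvar 0 * Ppoly (Suc m)"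

text \<open>Substitution a_k := cs ! k, where cs = [C_1, ..., C_(m-1)].\<close>
definition subst_list :: "qpoly list \<Rightarrow> nat \<Rightarrow> qpoly" where
  "subst_list cs k = (if k < length cs then cs ! k else 0)"

definition Cstep :: "nat \<Rightarrow> qpoly list \<Rightarrow> qpoly" where
  "Cstep m cs = - meval (subst_list cs) (Spoly m 0) +
     (\<Sum>i=1..m. of_nat (3 * 2^i) * meval (subst_list cs) (Spoly m i) * Ppoly i)"

text \<open>Clist m = [C_1, ..., C_m].\<close>
primrec Clist :: "nat \<Rightarrow> qpoly list" where
  "Clist 0 = []"
| "Clist (Suc m) = Clist m @ [Cstep (Suc m) (Clist m)]"

definition Chat :: "nat \<Rightarrow> qpoly" where
  "Chat m = Clist m ! (m - 1)"

end

theory Submission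
  imports Defs "HOL-Computational_Algebra.Polynomial"
begin

unbundle fps_syntax


abbreviation lk where "lk \<equiv> Poly_Mapping.lookup"
abbreviation ks where "ks \<equiv> Poly_Mapping.keys"

lemma lookup_mconst_mult: "lk (mconst r * x) m = r * lk x m"
proof -
  have "mconst r * x = Poly_Mapping.map ((*) r) x" unfolding mconst_def by (simp add: mult_map_scale_conv_mult)
  thus ?thesis by (simp add: map.rep_eq when_def)
qed

lemma mconst_0[simp]: "mconst 0 = 0" by (simp add: mconst_def)
lemma mconst_1[simp]: "mconst 1 = 1" by (simp add: mconst_def)
lemma mconst_add: "mconst (a + b) = mconst a + mconst b" by (simp add: mconst_def single_add)
lemma mconst_diff: "mconst (a - b) = mconst a - mconst b" by (simp add: mconst_def single_diff)
lemma mconst_uminus: "mconst (- a) = - mconst a" by (simp add: mconst_def single_uminus)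
lemma mconst_mult: "mconst (a * b) = mconst a * mconst b" by (simp add: mconst_def mult_single)
lemma mconst_of_int: "mconst (of_int z) = of_int z" by (simp add: mconst_def)
lemma mconst_of_nat: "mconst (of_nat z) = of_nat z" by (simp add: mconst_def)
lemma lookup_mconst: "lk (mconst r) m = (if m = 0 then r else 0)"
  by (simp add: mconst_def lookup_single)
lemma keys_mconst: "ks (mconst r) \<subseteq> {0}" by (simp add: mconst_def)
lemma mconst_inj: "mconst a = mconst b \<Longrightarrow> a = b"
  by (metis lookup_mconst)
lemma mconst_power: "mconst (a ^ n) = mconst a ^ n"
  by (induction n) (simp_all add: mconst_mult)

lemma keys_mconst_mult: "ks (mconst r * x) \<subseteq> ks x"
  by (auto simp: in_keys_iff lookup_mconst_mult)

lemma of_int_mult_cancel: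
  fixes x :: qpoly
  assumes "of_int z * x = 0" "z \<noteq> 0" shows "x = 0"
proof -
  have e: "1 / of_int z * of_int z = (1::rat)" using assms(2) by simp
  have "x = mconst (1 / of_int z * of_int z) * x" by (simp only: e mconst_1 mult_1_left)
  also have "\<dots> = mconst (1 / of_int z) * (of_int z * x)"
    by (simp only: mconst_mult mconst_of_int mult.assoc)
  also have "\<dots> = 0" using assms(1) by simp
  finally show ?thesis .
qed

lemma keys_sum': "ks (sum f A) \<subseteq> (\<Union>i\<in>A. ks (f i))"
proof (induction A rule: infinite_finite_induct)
  case (insert x F)
  thus ?case using keys_add[of "f x" "sum f F"] by auto
qed auto

section \<open>Grading\<close>

definition phi :: "(nat \<Rightarrow>\<^sub>0 nat) \<Rightarrow> nat" where
  "phi m = (\<Sum>k\<in>ks m. lk m k * (2*k+3))"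

lemma phi_add: "phi (a + b) = phi a + phi b"
  unfolding phi_def by (rule setsum_keys_plus_distrib) (auto simp: algebra_simps)

lemma phi_0[simp]: "phi 0 = 0" by (simp add: phi_def)

lemma phi_single: "phi (Poly_Mapping.single k 1) = 2*k+3" by (simp add: phi_def)

lemma phi_ge: "k \<in> ks m \<Longrightarrow> lk m k * (2*k+3) \<le> phi m"
  unfolding phi_def by (rule member_le_sum) auto

lemma phi_eq_0: "phi m = 0 \<Longrightarrow> m = 0"
proof (rule ccontr)
  assume "phi m = 0" "m \<noteq> 0"
  then obtain k where "k \<in> ks m" by fastforce
  with phi_ge[OF this] \<open>phi m = 0\<close> show False by (simp add: in_keys_iff)
qed

definition GrK :: "nat \<Rightarrow> qpoly \<Rightarrow> bool" where
  "GrK d c \<longleftrightarrow> (\<forall>m\<in>ks c. phi m \<le> d)"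

lemma GrK_0[simp]: "GrK d 0" by (simp add: GrK_def)
lemma GrK_mono: "GrK d c \<Longrightarrow> d \<le> d' \<Longrightarrow> GrK d' c" by (auto simp: GrK_def)
lemma GrK_add: "GrK d a \<Longrightarrow> GrK d b \<Longrightarrow> GrK d (a + b)"
  using keys_add[of a b] by (auto simp: GrK_def)
lemma GrK_uminus: "GrK d a \<Longrightarrow> GrK d (- a)"
  by (auto simp: GrK_def)
lemma GrK_diff: "GrK d a \<Longrightarrow> GrK d b \<Longrightarrow> GrK d (a - b)"
  using keys_diff[of a b] by (auto simp: GrK_def)
lemma GrK_mult: "GrK d a \<Longrightarrow> GrK d' b \<Longrightarrow> GrK (d + d') (a * b)"
  using keys_mult[of a b] by (force simp: GrK_def phi_add intro: add_mono)
lemma GrK_sum: "(\<And>i. i \<in> A \<Longrightarrow> GrK d (f i)) \<Longrightarrow> GrK d (sum f A)"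
  by (induction A rule: infinite_finite_induct) (auto intro: GrK_add)
lemma GrK_mconst[simp]: "GrK d (mconst r)"
  using keys_mconst[of r] by (auto simp: GrK_def)
lemma GrK_one[simp]: "GrK d 1"
  by (simp add: GrK_def)
lemma GrK_mconst_mult: "GrK d a \<Longrightarrow> GrK d (mconst r * a)"
  using keys_mconst_mult[of r a] by (auto simp: GrK_def)
lemma GrK_of_int[simp]: "GrK d (of_int z)"
  by (metis GrK_mconst mconst_of_int)
lemma GrK_of_nat[simp]: "GrK d (of_nat z)"
  by (metis GrK_mconst mconst_of_nat)
lemma GrK_mvar: "GrK (2*k+3) (mvar k)"
  using phi_single[of k] by (simp add: GrK_def mvar_def)

definition Gr :: "nat \<Rightarrow> qpoly poly \<Rightarrow> bool" where
  "Gr d p \<longleftrightarrow> (\<forall>e. \<forall>m\<in>ks (coeff p e). e + phi m \<le> d)"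

lemma Gr_0[simp]: "Gr d 0" by (simp add: Gr_def)
lemma Gr_mono: "Gr d p \<Longrightarrow> d \<le> d' \<Longrightarrow> Gr d' p" by (fastforce simp: Gr_def)
lemma Gr_add: "Gr d a \<Longrightarrow> Gr d b \<Longrightarrow> Gr d (a + b)"
  unfolding Gr_def coeff_add
proof (intro allI ballI)
  fix e m assume "\<forall>e. \<forall>m\<in>ks (coeff a e). e + phi m \<le> d" "\<forall>e. \<forall>m\<in>ks (coeff b e). e + phi m \<le> d"
    "m \<in> ks (coeff a e + coeff b e)"
  thus "e + phi m \<le> d" using keys_add[of "coeff a e" "coeff b e"] by blast
qed
lemma Gr_uminus: "Gr d a \<Longrightarrow> Gr d (- a)"
  by (auto simp: Gr_def)
lemma Gr_diff: "Gr d a \<Longrightarrow> Gr d b \<Longrightarrow> Gr d (a - b)"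
  by (simp only: diff_conv_add_uminus Gr_add Gr_uminus)
lemma Gr_sum: "(\<And>i. i \<in> A \<Longrightarrow> Gr d (f i)) \<Longrightarrow> Gr d (sum f A)"
  by (induction A rule: infinite_finite_induct) (auto intro: Gr_add)

lemma Gr_mult: assumes "Gr d a" "Gr d' b" shows "Gr (d + d') (a * b)"
  unfolding Gr_def
proof (intro allI ballI)
  fix e m assume m: "m \<in> ks (coeff (a * b) e)"
  hence "m \<in> ks (\<Sum>i\<le>e. coeff a i * coeff b (e - i))" by (simp add: coeff_mult)
  then obtain i where i: "i \<le> e" "m \<in> ks (coeff a i * coeff b (e - i))"
    using keys_sum'[of "\<lambda>i. coeff a i * coeff b (e - i)" "{..e}"] by blast
  then obtain m1 m2 where "m = m1 + m2" "m1 \<in> ks (coeff a i)" "m2 \<in> ks (coeff b (e - i))"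
    using keys_mult[of "coeff a i" "coeff b (e - i)"] by blast
  with assms i show "e + phi m \<le> d + d'"
    unfolding Gr_def by (fastforce simp: phi_add)
qed

lemma Gr_const: "GrK d c \<Longrightarrow> Gr d [:c:]"
  by (auto simp: Gr_def GrK_def coeff_pCons split: nat.splits)

lemma Gr_X: "Gr 1 [:0, 1:]"
  by (auto simp: Gr_def coeff_pCons split: nat.splits)
lemma Gr_X1: "Gr 1 [:1, 1:]"
  by (auto simp: Gr_def coeff_pCons split: nat.splits)

lemma Gr_one[simp]: "Gr d 1"
  by (auto simp: Gr_def coeff_1)

lemma Gr_pCons_D:
  assumes "Gr d (pCons a p)"
  shows "GrK d a" "\<And>e m. m \<in> ks (coeff p e) \<Longrightarrow> Suc e + phi m \<le> d"
proof -
  show "GrK d a" unfolding GrK_def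
  proof
    fix m assume "m \<in> ks a"
    hence "m \<in> ks (coeff (pCons a p) 0)" by simp
    thus "phi m \<le> d" using assms unfolding Gr_def by fastforce
  qed
  fix e m assume "m \<in> ks (coeff p e)"
  hence "m \<in> ks (coeff (pCons a p) (Suc e))" by simp
  thus "Suc e + phi m \<le> d" using assms unfolding Gr_def by blast
qed

lemma Gr_pcompose: "Gr d p \<Longrightarrow> Gr 1 q \<Longrightarrow> Gr d (pcompose p q)"
proof (induction p arbitrary: d)
  case 0 thus ?case by simp
next
  case (pCons a p)
  note D = Gr_pCons_D[OF pCons.prems(1)]
  show ?case
  proof (cases d)
    case 0
    with D(2) have "\<forall>e. ks (coeff p e) = {}" by fastforce
    hence "p = 0" by (metis keys_eq_empty coeff_0 poly_eqI)
    thus ?thesis using D(1) by (simp add: pcompose_pCons Gr_const)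
  next
    case (Suc d')
    have "Gr d' p" using D(2) Suc by (auto simp: Gr_def)
    hence "Gr d' (pcompose p q)" using pCons.IH pCons.prems by blast
    hence "Gr (1 + d') (q * pcompose p q)" using Gr_mult pCons.prems(2) by blast
    thus ?thesis using D(1) Suc by (auto simp: pcompose_pCons intro!: Gr_add Gr_const)
  qed
qed

lemma Gr_degree: "Gr d p \<Longrightarrow> degree p \<le> d"
proof (rule degree_le, intro allI impI)
  fix i assume "Gr d p" "d < i"
  thus "coeff p i = 0" unfolding Gr_def
    by (metis add_leD1 keys_eq_empty leD equals0I)
qed

lemma Gr_coeffK: "Gr d p \<Longrightarrow> e \<le> d \<Longrightarrow> GrK (d - e) (coeff p e)"
  by (fastforce simp: Gr_def GrK_def)



lemma pcompose_power: "pcompose (p ^ n) q = (pcompose p q) ^ n"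
  by (induction n) (simp_all add: pcompose_mult pcompose_1)

lemma coeff_X1_power: "coeff ([:1, 1:] ^ i) e = (of_nat (i choose e) :: 'a :: comm_semiring_1)"
proof (cases "e \<le> i")
  case True thus ?thesis using coeff_linear_poly_power[of e i 1 1] by simp
next
  case False
  have "degree ([:1::'a, 1:] ^ i) \<le> i"
    using degree_power_le[of "[:1::'a,1:]" i] by simp
  with False show ?thesis by (simp add: coeff_eq_0 binomial_eq_0)
qed

lemma coeff_shift:
  fixes p :: "'a :: comm_ring_1 poly"
  shows "coeff (pcompose p [:1, 1:]) e = (\<Sum>i\<le>degree p. of_nat (i choose e) * coeff p i)"
proof -
  have "pcompose p [:1, 1:] = pcompose (\<Sum>i\<le>degree p. monom (coeff p i) i) [:1, 1:]"
    by (simp add: poly_as_sum_of_monoms)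
  also have "\<dots> = (\<Sum>i\<le>degree p. smult (coeff p i) ([:1, 1:] ^ i))"
    by (simp add: pcompose_sum monom_altdef pcompose_smult pcompose_power pcompose_pCons)
  finally show ?thesis by (simp add: coeff_sum coeff_X1_power mult.commute)
qed

lemma coeff_shift_N:
  fixes p :: "'a :: comm_ring_1 poly"
  assumes "degree p \<le> N"
  shows "coeff (pcompose p [:1, 1:]) e = (\<Sum>i\<le>N. of_nat (i choose e) * coeff p i)"
  unfolding coeff_shift
  by (rule sum.mono_neutral_left) (use assms in \<open>auto simp: coeff_eq_0\<close>)

definition Dlt :: "qpoly poly \<Rightarrow> qpoly poly" where
  "Dlt p = pcompose p [:1, 1:] - p"

lemma Dlt_add: "Dlt (a + b) = Dlt a + Dlt b"
  by (simp add: Dlt_def pcompose_add)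

lemma Dlt_const: "Dlt [:c:] = 0" by (simp add: Dlt_def)

lemma poly_Dlt: "poly (Dlt p) x = poly p (x + 1) - poly p x"
  by (simp add: Dlt_def poly_pcompose algebra_simps)

lemma antidiff_step:
  fixes c :: qpoly and e :: nat
  defines "c' \<equiv> mconst (1 / of_nat (Suc e)) * c"
  defines "s0 \<equiv> monom c' (Suc e)"
  shows "coeff (Dlt s0) k = (if k \<le> e then of_nat (Suc e choose k) * c' else 0)"
    and "of_nat (Suc e) * c' = c"
proof -
  have cs0: "coeff s0 i = (if i = Suc e then c' else 0)" for i
    by (simp add: s0_def coeff_monom)
  have "degree s0 \<le> Suc e" by (simp add: s0_def degree_monom_le)
  hence "coeff (pcompose s0 [:1,1:]) k = (\<Sum>i\<le>Suc e. of_nat (i choose k) * coeff s0 i)"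
    by (rule coeff_shift_N)
  also have "\<dots> = of_nat (Suc e choose k) * c'"
    by (simp add: cs0 if_distrib cong: if_cong)
  finally show "coeff (Dlt s0) k = (if k \<le> e then of_nat (Suc e choose k) * c' else 0)"
    by (auto simp: Dlt_def cs0 binomial_eq_0)
  have "of_nat (Suc e) * c' = mconst (of_nat (Suc e) * (1 / of_nat (Suc e))) * c"
    by (simp only: c'_def mconst_mult mconst_of_nat mult.assoc)
  also have "\<dots> = c" by simp
  finally show "of_nat (Suc e) * c' = c" .
qed

lemma antidiff: "Gr d p \<Longrightarrow> \<exists>s. Dlt s = p \<and> Gr (Suc d) s"
proof (induction "degree p" arbitrary: p rule: less_induct)
  case less
  show ?case
  proof (cases "p = 0")
    case True thus ?thesis by (intro exI[of _ 0]) (simp add: Dlt_def)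
  next
    case False
    define e where "e = degree p"
    define c where "c = coeff p e"
    define c' where "c' = mconst (1 / of_nat (Suc e)) * c"
    define s0 where "s0 = monom c' (Suc e)"
    note st = antidiff_step[where c=c and e=e, folded c'_def, folded s0_def]
    have ed: "e \<le> d" using Gr_degree[OF less.prems] e_def by simp
    have Gc: "GrK (d - e) c" using Gr_coeffK[OF less.prems ed] c_def by simp
    have Gc': "GrK (d - e) c'" unfolding c'_def by (rule GrK_mconst_mult[OF Gc])
    have GDs0: "Gr d (Dlt s0)" unfolding Gr_def
    proof (intro allI ballI)
      fix k m assume m: "m \<in> ks (coeff (Dlt s0) k)"
      hence k: "k \<le> e" by (auto simp: st(1) split: if_splits)
      with m have "m \<in> ks (of_nat (Suc e choose k) * c')" by (simp add: st(1))
      hence "m \<in> ks c'" using keys_mconst_mult[of "of_nat (Suc e choose k)" c']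
        by (auto simp: mconst_of_nat)
      with Gc' k ed show "k + phi m \<le> d" by (auto simp: GrK_def)
    qed
    have Gs0: "Gr (Suc d) s0" unfolding Gr_def
    proof (intro allI ballI)
      fix k m assume m: "m \<in> ks (coeff s0 k)"
      hence "k = Suc e" "m \<in> ks c'" by (auto simp: s0_def coeff_monom split: if_splits)
      with Gc' ed show "k + phi m \<le> Suc d" by (auto simp: GrK_def)
    qed
    define p' where "p' = p - Dlt s0"
    have Gp': "Gr d p'" unfolding p'_def by (rule Gr_diff[OF less.prems GDs0])
    have cp': "coeff p' k = 0" if "k \<ge> e" for k
    proof (cases "k = e")
      case True thus ?thesis using st by (simp add: p'_def c_def)
    next
      case False
      with that have "k > e" by simp
      thus ?thesis by (simp add: p'_def st(1) e_def coeff_eq_0)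
    qed
    show ?thesis
    proof (cases "p' = 0")
      case True
      hence "Dlt s0 = p" by (simp add: p'_def)
      thus ?thesis using Gs0 by blast
    next
      case False
      have "degree p' < e"
      proof (rule ccontr)
        assume "\<not> degree p' < e"
        hence "coeff p' (degree p') = 0" using cp' by simp
        with False show False by simp
      qed
      then obtain s' where s': "Dlt s' = p'" "Gr (Suc d) s'"
        using less.hyps[of p'] Gp' e_def by blast
      have "Dlt (s0 + s') = p" by (simp add: Dlt_add s' p'_def)
      moreover have "Gr (Suc d) (s0 + s')" by (rule Gr_add[OF Gs0 s'(2)])
      ultimately show ?thesis by blast
    qed
  qed
qed




section \<open>Polynomials determined by integer values\<close>

lemma lookup_poly_of_int:
  "lk (poly P (of_int j :: qpoly)) m = poly (map_poly (\<lambda>c. lk c m) P) (of_int j)"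
proof (induction P)
  case 0 thus ?case by simp
next
  case (pCons a P)
  have "lk (poly (pCons a P) (of_int j)) m = lk a m + of_int j * lk (poly P (of_int j)) m"
    by (simp add: lookup_add mconst_of_int[symmetric] lookup_mconst_mult)
  thus ?case using pCons.IH by (simp add: map_poly_pCons)
qed

lemma rat_poly_int_zero:
  fixes p :: "rat poly"
  assumes "\<And>j::int. poly p (of_int j) = 0" shows "p = 0"
proof (rule ccontr)
  assume "p \<noteq> 0"
  hence "finite {x. poly p x = 0}" by (rule poly_roots_finite)
  moreover have "range (of_int :: int \<Rightarrow> rat) \<subseteq> {x. poly p x = 0}" using assms by auto
  moreover have "infinite (range (of_int :: int \<Rightarrow> rat))"
  proof
    assume "finite (range (of_int :: int \<Rightarrow> rat))"
    hence "finite (UNIV :: int set)" by (rule finite_imageD) (simp add: inj_on_def)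
    thus False by simp
  qed
  ultimately show False by (meson finite_subset)
qed

lemma poly_int_unique:
  fixes p q :: "qpoly poly"
  assumes "\<And>j::int. poly p (of_int j) = poly q (of_int j)" shows "p = q"
proof -
  have "coeff (p - q) i = 0" for i
  proof (rule poly_mapping_eqI)
    fix m
    have "map_poly (\<lambda>c. lk c m) (p - q) = 0"
      by (rule rat_poly_int_zero) (simp add: lookup_poly_of_int[symmetric] assms)
    hence "coeff (map_poly (\<lambda>c. lk c m) (p - q)) i = 0" by simp
    thus "lk (coeff (p - q) i) m = lk 0 m" by (simp add: coeff_map_poly)
  qed
  thus ?thesis by (metis coeff_0 poly_eqI right_minus_eq)
qed

lemma int_shift_const:
  fixes g :: "int \<Rightarrow> 'a"
  assumes "\<And>j. g (j + 1) = g j" shows "g j = g 0"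
proof (induction j rule: int_induct[where k=0])
  case base thus ?case by simp
next
  case (step1 i) thus ?case using assms[of i] by simp
next
  case (step2 i) thus ?case using assms[of "i - 1"] by simp
qed

section \<open>The series R\<close>

definition Rs :: "int \<Rightarrow> qpoly fps" where
  "Rs j = (if 0 \<le> j then Aser ^ nat j * (\<Prod>i<nat j. finv (onepl (int i)))
           else (\<Prod>i\<in>{1..nat (-j)}. onepl (- int i)) * finv Aser ^ nat (-j))"

lemma onepl_0: "onepl i $ 0 = 1" by (simp add: onepl_def)
lemma Aser_0: "Aser $ 0 = 1" by (simp add: Aser_def)

lemma finv_onepl: "onepl i * finv (onepl i) = 1"
  unfolding finv_def by (rule fps_right_inverse) (simp add: onepl_0)
lemma finv_Aser: "Aser * finv Aser = 1"
  unfolding finv_def by (rule fps_right_inverse) (simp add: Aser_0)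

lemma Aser_nth: "Aser $ t = (if t = 0 then 1 else if t = 1 then 0 else mvar (t - 2))"
  by (simp add: Aser_def afps_def fps_X_power_mult_right_nth)

lemma Rs_rec: "Rs (j + 1) * onepl j = Aser * Rs j"
proof (cases "0 \<le> j")
  case True
  then obtain n where n: "j = int n" by (metis nonneg_int_cases)
  have j1: "j + 1 = int (Suc n)" by (simp add: n)
  have "Rs (j + 1) = Aser ^ Suc n * (\<Prod>i<Suc n. finv (onepl (int i)))"
    unfolding j1 Rs_def by (simp only: nat_int if_True of_nat_0_le_iff)
  hence "Rs (j + 1) * onepl j = Aser ^ Suc n * (\<Prod>i<n. finv (onepl (int i))) * (finv (onepl (int n)) * onepl (int n))"
    by (simp add: n mult_ac)
  also have "\<dots> = Aser * Rs j" using finv_onepl[of "int n"]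
    by (simp add: Rs_def n mult_ac)
  finally show ?thesis .
next
  case False
  define t where "t = nat (-j)"
  have t: "t \<ge> 1" "j = - int t" using False by (auto simp: t_def)
  have R1: "Rs (j + 1) = (\<Prod>i\<in>{1..t-1}. onepl (- int i)) * finv Aser ^ (t - 1)"
  proof (cases "t = 1")
    case True thus ?thesis using t by (simp add: Rs_def)
  next
    case False
    with t have "\<not> 0 \<le> j + 1" "nat (- (j + 1)) = t - 1" by auto
    thus ?thesis by (simp add: Rs_def)
  qed
  have Rj: "Rs j = (\<Prod>i\<in>{1..t}. onepl (- int i)) * finv Aser ^ t"
    by (simp only: Rs_def if_not_P[OF False] t_def)
  have "{1..t} = insert t {1..t-1}" using t by auto
  hence P: "(\<Prod>i\<in>{1..t}. onepl (- int i)) = onepl (- int t) * (\<Prod>i\<in>{1..t-1}. onepl (- int i))"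
    using t by (simp del: One_nat_def add: prod.insert)
  have F: "finv Aser ^ t = finv Aser * finv Aser ^ (t - 1)"
  proof -
    obtain s where "t = Suc s" using t(1) by (cases t) auto
    thus ?thesis by simp
  qed
  have "Aser * Rs j = (Aser * finv Aser) * (onepl (- int t) * (\<Prod>i\<in>{1..t-1}. onepl (- int i)) * finv Aser ^ (t - 1))"
    unfolding Rj P F by (simp only: ac_simps)
  also have "\<dots> = Rs (j + 1) * onepl j"
    unfolding finv_Aser mult_1_left R1 by (simp only: t(2) ac_simps)
  finally show ?thesis by simp
qed

definition rr :: "nat \<Rightarrow> int \<Rightarrow> qpoly" where
  "rr k j = Rs j $ k"

lemma rr_0_at0: "rr k 0 = (if k = 0 then 1 else 0)"
  by (simp add: rr_def Rs_def)

lemma rr_rec: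
  "rr k (j + 1) + (if k = 0 then 0 else of_int j * rr (k - 1) (j + 1)) =
   (\<Sum>t\<le>k. Aser $ t * rr (k - t) j)"
proof -
  have "(Rs (j + 1) * onepl j) $ k = (Aser * Rs j) $ k" by (simp add: Rs_rec)
  moreover have "(Aser * Rs j) $ k = (\<Sum>t\<le>k. Aser $ t * rr (k - t) j)"
    by (simp add: fps_mult_nth rr_def atLeast0AtMost)
  moreover have "(Rs (j + 1) * onepl j) $ k = rr k (j + 1) + (if k = 0 then 0 else of_int j * rr (k - 1) (j + 1))"
  proof -
    have "Rs (j + 1) * onepl j = Rs (j + 1) + fps_const (of_int j) * (Rs (j + 1) * fps_X)"
      by (simp add: onepl_def algebra_simps)
    thus ?thesis by (simp add: rr_def)
  qed
  ultimately show ?thesis by simp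
qed




definition piP :: "(nat \<Rightarrow> qpoly poly) \<Rightarrow> nat \<Rightarrow> qpoly poly" where
  "piP rh k = - ([:0, 1:] * pcompose (rh (k - 1)) [:1, 1:]) + (\<Sum>t\<in>{2..k}. [:mvar (t - 2):] * rh (k - t))"

lemma sum_split01:
  fixes f :: "nat \<Rightarrow> 'a :: comm_monoid_add"
  assumes "k \<ge> 1" shows "(\<Sum>t\<le>k. f t) = f 0 + f 1 + (\<Sum>t\<in>{2..k}. f t)"
proof -
  have "{..k} = {0, 1} \<union> {2..k}" using assms by auto
  hence "(\<Sum>t\<le>k. f t) = (\<Sum>t\<in>{0,1}. f t) + (\<Sum>t\<in>{2..k}. f t)"
    by (simp add: sum.union_disjoint add.assoc)
  thus ?thesis by (simp add: add.assoc)
qed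

lemma rr_0: "rr 0 j = 1"
proof -
  have "rr 0 (j + 1) = rr 0 j" for j using rr_rec[of 0 j] by (simp add: Aser_nth)
  hence "rr 0 j = rr 0 0" by (rule int_shift_const)
  thus ?thesis by (simp add: rr_0_at0)
qed

lemma lin_aux: fixes A B C S :: "'a :: ab_group_add"
  assumes "A + B = C + S" shows "A - C = - B + S"
proof -
  have "A = C + S - B" using assms by (simp add: eq_diff_eq)
  thus ?thesis by simp
qed

lemma rr_diff:
  assumes k: "k \<ge> 1" and rep: "\<And>i j. i < k \<Longrightarrow> poly (rh i) (of_int j) = rr i j"
  shows "rr k (j + 1) - rr k j = poly (piP rh k) (of_int j)"
proof -
  have rec: "rr k (j + 1) + of_int j * rr (k - 1) (j + 1) = rr k j + (\<Sum>t\<in>{2..k}. mvar (t - 2) * rr (k - t) j)"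
    using rr_rec[of k j] k by (simp add: sum_split01 Aser_nth)
  have "poly (rh (k - 1)) (of_int (j + 1)) = rr (k - 1) (j + 1)"
    using rep[of "k - 1" "j + 1"] k by simp
  hence s1: "poly (rh (k - 1)) (1 + of_int j) = rr (k - 1) (j + 1)"
    by (simp add: add.commute)
  have "poly (piP rh k) (of_int j) = - (of_int j * rr (k - 1) (j + 1)) + (\<Sum>t\<in>{2..k}. mvar (t - 2) * rr (k - t) j)"
    unfolding piP_def using k
    by (simp add: poly_pcompose s1[simplified] rep poly_sum del: of_int_add)
  moreover have "rr k (j + 1) - rr k j = - (of_int j * rr (k - 1) (j + 1)) + (\<Sum>t\<in>{2..k}. mvar (t - 2) * rr (k - t) j)"
    using rec by (rule lin_aux)
  ultimately show ?thesis by simp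
qed

lemma Gr_piP:
  assumes k: "k \<ge> 1" and G: "\<And>i. i < k \<Longrightarrow> Gr (2 * i) (rh i)"
  shows "Gr (2 * k - 1) (piP rh k)"
  unfolding piP_def
proof (intro Gr_add Gr_uminus Gr_sum)
  have "Gr (1 + 2 * (k - 1)) ([:0, 1:] * pcompose (rh (k - 1)) [:1, 1:])"
    by (intro Gr_mult Gr_X Gr_pcompose Gr_X1 G) (use k in auto)
  moreover have "1 + 2 * (k - 1) = 2 * k - 1" using k by simp
  ultimately show "Gr (2 * k - 1) ([:0, 1:] * pcompose (rh (k - 1)) [:1, 1:])" by simp
next
  fix t assume t: "t \<in> {2..k}"
  have "Gr ((2 * (t - 2) + 3) + 2 * (k - t)) ([:mvar (t - 2):] * rh (k - t))"
    by (intro Gr_mult Gr_const GrK_mvar G) (use t in auto)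
  moreover have "(2 * (t - 2) + 3) + 2 * (k - t) = 2 * k - 1" using t by auto
  ultimately show "Gr (2 * k - 1) ([:mvar (t - 2):] * rh (k - t))" by simp
qed

definition repr :: "nat \<Rightarrow> qpoly poly \<Rightarrow> bool" where
  "repr k p \<longleftrightarrow> (\<forall>j. poly p (of_int j) = rr k j) \<and> Gr (2 * k) p"

lemma rho_exists: "\<exists>p. repr k p"
proof (induction k rule: less_induct)
  case (less k)
  show ?case
  proof (cases "k = 0")
    case True
    have "repr 0 1" by (simp add: repr_def rr_0)
    thus ?thesis using True by blast
  next
    case False
    hence k: "k \<ge> 1" by simp
    define rh where "rh i = (SOME p. repr i p)" for i
    have rh: "repr i (rh i)" if "i < k" for i
      unfolding rh_def using less.IH[OF that] by (rule someI_ex)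
    have Gpi: "Gr (2 * k - 1) (piP rh k)"
      by (rule Gr_piP[OF k]) (use rh in \<open>auto simp: repr_def\<close>)
    obtain s where s: "Dlt s = piP rh k" "Gr (Suc (2 * k - 1)) s"
      using antidiff[OF Gpi] by blast
    have Gs: "Gr (2 * k) s" using s(2) k by simp
    define p where "p = s - [:coeff s 0:]"
    have "Gr (2 * k) p" unfolding p_def
      by (intro Gr_diff Gs Gr_const) (use Gr_coeffK[OF Gs, of 0] in simp)
    moreover have "poly p (of_int j) = rr k j" for j
    proof -
      define g where "g j = rr k j - poly s (of_int j)" for j
      have "g (j + 1) = g j" for j
      proof -
        have "rr k (j + 1) - rr k j = poly (Dlt s) (of_int j)"
          using rr_diff[OF k, of rh j] rh s(1) by (simp add: repr_def)
        thus ?thesis by (simp add: g_def poly_Dlt algebra_simps)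
      qed
      hence "g j = g 0" by (rule int_shift_const)
      hence "rr k j - poly s (of_int j) = - coeff s 0"
        using False by (simp add: g_def rr_0_at0 poly_0_coeff_0)
      thus ?thesis by (simp add: p_def algebra_simps)
    qed
    ultimately show ?thesis unfolding repr_def by blast
  qed
qed

definition rho :: "nat \<Rightarrow> qpoly poly" where
  "rho k = (SOME p. repr k p)"

lemma rho_repr: "repr k (rho k)"
  unfolding rho_def using rho_exists by (rule someI_ex)

lemma rho_poly: "poly (rho k) (of_int j) = rr k j"
  using rho_repr by (simp add: repr_def)

lemma rho_Gr: "Gr (2 * k) (rho k)"
  using rho_repr by (simp add: repr_def)

lemma rho_0: "rho 0 = 1"
  by (rule poly_int_unique) (simp add: rho_poly rr_0)

lemma Dlt_rho: assumes "k \<ge> 1" shows "Dlt (rho k) = piP rho k"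
proof (rule poly_int_unique)
  fix j :: int
  have "poly (Dlt (rho k)) (of_int j) = rr k (j + 1) - rr k j"
    using rho_poly[of k "j + 1"] by (simp add: poly_Dlt rho_poly)
  also have "\<dots> = poly (piP rho k) (of_int j)"
    by (rule rr_diff[OF assms]) (rule rho_poly)
  finally show "poly (Dlt (rho k)) (of_int j) = poly (piP rho k) (of_int j)" .
qed

lemma degree_rho: "degree (rho k) \<le> 2 * k"
  by (rule Gr_degree[OF rho_Gr])



definition cc :: "nat \<Rightarrow> rat" where
  "cc k = (-1) ^ k / (2 ^ k * fact k)"
definition dd :: "nat \<Rightarrow> rat" where
  "dd k = (-1) ^ k * (2 * of_nat k - 5) / (3 * 2 ^ k * fact (k - 1))"

lemma R1_aux: fixes S P F y :: rat assumes "P \<noteq> 0" "F \<noteq> 0" "y \<noteq> 0"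
  shows "(2 * y) * (- S / (2 * P * (y * F))) = - (S / (P * F))"
  using assms by (simp add: field_simps)

lemma R1: "of_nat (2 * Suc k) * cc (Suc k) = - cc k"
proof -
  have "cc (Suc k) = (- ((-1) ^ k)) / (2 * 2 ^ k * (of_nat (Suc k) * fact k))"
    unfolding cc_def by (simp only: fact_Suc power_Suc of_nat_mult)
  moreover have "of_nat (2 * Suc k) = (2 * of_nat (Suc k) :: rat)" by simp
  ultimately show ?thesis unfolding cc_def
    by (simp only:) (rule R1_aux, auto)
qed

lemma R2a: "of_nat (2 * 1 - 1) * dd 1 + of_nat (1 * (2 * 1 - 1)) * cc 1 = 0"
  by (simp add: cc_def dd_def)

lemma R2b_aux:
  fixes F P S y z :: rat
  assumes "F \<noteq> 0" "P \<noteq> 0" "y \<noteq> 0" "z \<noteq> 0" "z = y + 1"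
  shows "(2 * z - 1) * (S * (2 * z - 5) / (3 * (2 * (2 * P)) * (y * F)))
     + (z * (2 * z - 1)) * (S / (2 * (2 * P) * (z * (y * F))))
   = - ((- S) * (2 * y - 5) / (3 * (2 * P) * F) + (2 * y) * ((- S) / (2 * P * (y * F))))"
proof -
  have "(2 * z - 1) * (S * (2 * z - 5) / (3 * (2 * (2 * P)) * (y * F)))
     + (z * (2 * z - 1)) * (S / (2 * (2 * P) * (z * (y * F))))
     = S * ((2 * z - 1) * (2 * z - 5) + 3 * (2 * z - 1)) / (12 * P * y * F)"
    using assms(1-4) by (simp add: field_simps)
  also have "\<dots> = S * ((2 * y + 1) * (2 * y)) / (12 * P * y * F)"
    unfolding assms(5) by (simp add: algebra_simps)
  also have "\<dots> = - ((- S) * (2 * y - 5) / (3 * (2 * P) * F) + (2 * y) * ((- S) / (2 * P * (y * F))))"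
    using assms(1-4) by (simp add: field_simps)
  finally show ?thesis .
qed

lemma R2b: "of_nat (2 * Suc (Suc m) - 1) * dd (Suc (Suc m)) + of_nat (Suc (Suc m) * (2 * Suc (Suc m) - 1)) * cc (Suc (Suc m))
   = - (dd (Suc m) + of_nat (2 * Suc m) * cc (Suc m))"
proof -
  define y :: rat where "y = of_nat (Suc m)"
  define z :: rat where "z = of_nat (Suc (Suc m))"
  have e1: "of_nat (2 * Suc (Suc m) - 1) = (2 * z - 1 :: rat)" by (simp add: of_nat_diff z_def)
  have e2: "of_nat (Suc (Suc m) * (2 * Suc (Suc m) - 1)) = (z * (2 * z - 1) :: rat)"
    by (simp add: of_nat_diff z_def algebra_simps)
  have e3: "dd (Suc (Suc m)) = (-1)^m * (2 * z - 5) / (3 * (2 * (2 * 2^m)) * (y * fact m))"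
    unfolding dd_def z_def y_def by (simp only: fact_Suc power_Suc of_nat_mult diff_Suc_1)
  have e4: "cc (Suc (Suc m)) = (-1)^m / (2 * (2 * 2^m) * (z * (y * fact m)))"
    unfolding cc_def z_def y_def by (simp only: fact_Suc power_Suc of_nat_mult)
  have e5: "dd (Suc m) = (- ((-1)^m)) * (2 * y - 5) / (3 * (2 * 2^m) * fact m)"
    unfolding dd_def y_def by simp
  have e6: "cc (Suc m) = (- ((-1)^m)) / (2 * 2^m * (y * fact m))"
    unfolding cc_def y_def by (simp only: fact_Suc power_Suc of_nat_mult)
  have e7: "of_nat (2 * Suc m) = (2 * y :: rat)" by (simp add: y_def)
  show ?thesis unfolding e1 e2 e3 e4 e5 e6 e7
    by (rule R2b_aux) (auto simp: y_def z_def)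
qed



lemma coeff_shift_window:
  fixes p :: "'a :: comm_ring_1 poly"
  assumes "degree p \<le> Suc (Suc m)"
  shows "coeff (pcompose p [:1, 1:]) m = coeff p m + of_nat (Suc m) * coeff p (Suc m)
           + of_nat (Suc (Suc m) choose m) * coeff p (Suc (Suc m))"
proof -
  have "coeff (pcompose p [:1, 1:]) m = (\<Sum>i\<le>Suc (Suc m). of_nat (i choose m) * coeff p i)"
    by (rule coeff_shift_N[OF assms])
  also have "{..Suc (Suc m)} = {..<m} \<union> {m, Suc m, Suc (Suc m)}" by auto
  also have "(\<Sum>i\<in>{..<m} \<union> {m, Suc m, Suc (Suc m)}. of_nat (i choose m) * coeff p i)
      = (\<Sum>i\<in>{..<m}. of_nat (i choose m) * coeff p i) + (\<Sum>i\<in>{m, Suc m, Suc (Suc m)}. of_nat (i choose m) * coeff p i)"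
    by (rule sum.union_disjoint) auto
  also have "(\<Sum>i\<in>{..<m}. of_nat (i choose m) * coeff p i) = 0"
    by (rule sum.neutral) (auto simp: binomial_eq_0)
  finally show ?thesis by (simp add: add.assoc)
qed

lemma choose_top2: "(2 * Suc k choose (2 * Suc k - 2)) = Suc k * (2 * Suc k - 1)"
proof -
  have "(2 * Suc k choose (2 * Suc k - 2)) = (2 * Suc k choose 2)"
    by (subst binomial_symmetric) auto
  also have "\<dots> = (2 * Suc k) * (2 * Suc k - 1) div 2" by (rule choose_two)
  also have "\<dots> = Suc k * (2 * Suc k - 1)" by simp
  finally show ?thesis .
qed

lemma coeff_const_mult: "coeff ([:a:] * p) e = a * coeff p e"
  by simp

lemma coeff_X_mult: fixes p :: "'a :: comm_ring_1 poly" shows "coeff ([:0, 1:] * p) e = (if e = 0 then 0 else coeff p (e - 1))"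
  by (simp add: coeff_pCons split: nat.splits)

lemma coeff_piP:
  assumes "K \<ge> 1" "2 * K < e + 4"
  shows "coeff (piP rho K) e = (if e = 0 then 0 else - coeff (pcompose (rho (K - 1)) [:1, 1:]) (e - 1))"
proof -
  have "coeff (\<Sum>t\<in>{2..K}. [:mvar (t - 2):] * rho (K - t)) e = 0"
  proof -
    have *: "coeff ([:mvar (t - 2):] * rho (K - t)) e = 0" if "t \<in> {2..K}" for t
    proof -
      have "degree (rho (K - t)) < e" using degree_rho[of "K - t"] that assms by auto
      thus ?thesis by (simp add: coeff_eq_0)
    qed
    show ?thesis unfolding coeff_sum by (rule sum.neutral) (use * in blast)
  qed
  thus ?thesis unfolding piP_def coeff_add coeff_minus coeff_X_mult by simp
qed

lemma nat_mult_cancel_q: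
  fixes x y :: qpoly
  assumes "of_nat n * x = of_nat n * y" "n \<noteq> 0" shows "x = y"
proof -
  have "of_int (int n) * (x - y) = 0" using assms(1) by (simp add: algebra_simps)
  hence "x - y = 0" by (rule of_int_mult_cancel) (use assms(2) in simp)
  thus ?thesis by simp
qed

lemma top_coeffs:
  "coeff (rho k) (2 * k) = mconst (cc k) \<and> (k \<ge> 1 \<longrightarrow> coeff (rho k) (2 * k - 1) = mconst (dd k))"
proof (induction k)
  case 0 thus ?case by (simp add: rho_0 cc_def)
next
  case (Suc k)
  define K where "K = Suc k"
  define a where "a = coeff (rho K) (2 * K)"
  define b where "b = coeff (rho K) (2 * K - 1)"
  have degK: "degree (rho K) \<le> 2 * K" by (rule degree_rho)
  have DK: "Dlt (rho K) = piP rho K" by (rule Dlt_rho) (simp add: K_def)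
  have E1: "coeff (Dlt (rho K)) (2 * K - 1) = of_nat (2 * K) * a"
  proof -
    have "coeff (pcompose (rho K) [:1, 1:]) (2 * K - 1) = coeff (rho K) (2 * K - 1) + of_nat (2 * K) * a"
      using coeff_shift_window[of "rho K" "2 * K - 1"] degK
      by (simp add: K_def a_def coeff_eq_0)
    thus ?thesis by (simp add: Dlt_def b_def)
  qed
  have P1: "coeff (piP rho K) (2 * K - 1) = - mconst (cc k)"
  proof -
    have "coeff (piP rho K) (2 * K - 1) = - coeff (pcompose (rho k) [:1, 1:]) (2 * k)"
      by (subst coeff_piP) (auto simp: K_def)
    also have "coeff (pcompose (rho k) [:1, 1:]) (2 * k) = coeff (rho k) (2 * k)"
      using coeff_shift_window[of "rho k" "2 * k"] degree_rho[of k]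
      by (simp add: coeff_eq_0)
    finally show ?thesis using Suc.IH by simp
  qed
  have A: "a = mconst (cc K)"
  proof (rule nat_mult_cancel_q)
    show "of_nat (2 * K) * a = of_nat (2 * K) * mconst (cc K)"
      using E1 P1 DK R1[of k] by (simp add: K_def mconst_of_nat[symmetric] mconst_mult[symmetric] mconst_uminus)
  qed (simp add: K_def)
  have E2: "coeff (Dlt (rho K)) (2 * K - 2) = of_nat (2 * K - 1) * b + of_nat (K * (2 * K - 1)) * a"
  proof -
    have S1: "Suc (2 * K - 2) = 2 * K - 1" and S2: "Suc (2 * K - 1) = 2 * K" by (auto simp: K_def)
    have C: "(2 * K choose (2 * K - 2)) = K * (2 * K - 1)" using choose_top2[of k] by (simp only: K_def)
    have "coeff (pcompose (rho K) [:1, 1:]) (2 * K - 2) = coeff (rho K) (2 * K - 2) + of_nat (2 * K - 1) * b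
        + of_nat (K * (2 * K - 1)) * a"
      using coeff_shift_window[of "rho K" "2 * K - 2", unfolded S1 S2 C] degK by (simp add: a_def b_def)
    thus ?thesis by (simp add: Dlt_def)
  qed
  have P2: "coeff (piP rho K) (2 * K - 2) = (if k = 0 then 0 else - (mconst (dd k) + of_nat (2 * k) * mconst (cc k)))"
  proof (cases "k = 0")
    case True thus ?thesis by (subst coeff_piP) (auto simp: K_def)
  next
    case False
    have "coeff (piP rho K) (2 * K - 2) = - coeff (pcompose (rho k) [:1, 1:]) (2 * k - 1)"
      using False by (subst coeff_piP) (auto simp: K_def)
    also have "coeff (pcompose (rho k) [:1, 1:]) (2 * k - 1) = coeff (rho k) (2 * k - 1) + of_nat (2 * k) * coeff (rho k) (2 * k)"
      using coeff_shift_window[of "rho k" "2 * k - 1"] degree_rho[of k] False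
      by (simp add: coeff_eq_0)
    finally show ?thesis using Suc.IH False by simp
  qed
  have B: "b = mconst (dd K)"
  proof (rule nat_mult_cancel_q)
    have eq: "of_nat (2 * K - 1) * b = coeff (piP rho K) (2 * K - 2) - of_nat (K * (2 * K - 1)) * a"
      using E2 DK by (simp add: algebra_simps)
    show "of_nat (2 * K - 1) * b = of_nat (2 * K - 1) * mconst (dd K)"
    proof (cases "k = 0")
      case True
      have d1: "dd (Suc 0) = - cc (Suc 0)" using R2a by (simp add: eq_neg_iff_add_eq_0)
      have "of_nat (2 * K - 1) * mconst (dd K) = - (of_nat (K * (2 * K - 1)) * mconst (cc K))"
        using True by (simp add: K_def d1 mconst_uminus)
      thus ?thesis using eq P2 True A by simp
    next
      case False
      then obtain m where m: "k = Suc m" by (cases k) auto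
      have "of_nat (2 * K - 1) * mconst (dd K) = - (mconst (dd k) + of_nat (2 * k) * mconst (cc k)) - of_nat (K * (2 * K - 1)) * mconst (cc K)"
      proof -
        have r: "of_nat (2 * Suc (Suc m) - 1) * dd (Suc (Suc m)) =
           - (dd (Suc m) + of_nat (2 * Suc m) * cc (Suc m)) - of_nat (Suc (Suc m) * (2 * Suc (Suc m) - 1)) * cc (Suc (Suc m))"
          unfolding eq_diff_eq by (rule R2b)
        show ?thesis unfolding K_def m
          by (simp only: mconst_of_nat[symmetric] mconst_mult[symmetric] mconst_uminus[symmetric] mconst_add[symmetric] mconst_diff[symmetric] r)
      qed
      thus ?thesis using eq P2 False A by simp
    qed
  qed (simp add: K_def)
  show ?case using A B by (simp add: a_def b_def K_def)
qed




section \<open>G and H as values of Rs\<close>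

lemma Gser_Rs: assumes "j \<ge> 1" shows "Gser j = Rs j"
proof -
  have im: "{0..j-1} = int ` {..<nat j}"
  proof
    show "{0..j - 1} \<subseteq> int ` {..<nat j}"
    proof
      fix x assume "x \<in> {0..j-1}"
      hence "x = int (nat x)" "nat x < nat j" by auto
      thus "x \<in> int ` {..<nat j}" by blast
    qed
  qed auto
  have "Gser j = (\<Prod>i\<in>{0..j-1}. Aser) * (\<Prod>i\<in>{0..j-1}. finv (onepl i))"
    by (simp add: Gser_def prod.distrib)
  also have "(\<Prod>i\<in>{0..j-1}. Aser) = Aser ^ nat j" using assms by simp
  also have "(\<Prod>i\<in>{0..j-1}. finv (onepl i)) = (\<Prod>i<nat j. finv (onepl (int i)))"
    unfolding im by (subst prod.reindex) (auto simp: inj_on_def)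
  finally show ?thesis using assms by (simp add: Rs_def)
qed

lemma Hser_Rs: assumes "j \<ge> 1" shows "Hser j = Rs (1 - j)"
proof -
  have im: "{1-j..-1} = (\<lambda>i. - int i) ` {1..nat (j - 1)}"
  proof
    show "{1-j..-1} \<subseteq> (\<lambda>i. - int i) ` {1..nat (j - 1)}"
    proof
      fix x assume "x \<in> {1-j..-1}"
      hence "x = - int (nat (-x))" "nat (-x) \<in> {1..nat (j - 1)}" by auto
      thus "x \<in> (\<lambda>i. - int i) ` {1..nat (j - 1)}" by blast
    qed
  qed auto
  have "Hser j = (\<Prod>i\<in>{1-j..-1}. onepl i) * (\<Prod>i\<in>{1-j..-1}. finv Aser)"
    by (simp add: Hser_def prod.distrib)
  also have "(\<Prod>i\<in>{1-j..-1}. finv Aser) = finv Aser ^ nat (j - 1)" by simp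
  also have "(\<Prod>i\<in>{1-j..-1}. onepl i) = (\<Prod>i\<in>{1..nat (j - 1)}. onepl (- int i))"
    unfolding im by (subst prod.reindex) (auto simp: inj_on_def)
  finally have H: "Hser j = (\<Prod>i\<in>{1..nat (j - 1)}. onepl (- int i)) * finv Aser ^ nat (j - 1)" .
  show ?thesis
  proof (cases "j = 1")
    case True thus ?thesis using H by (simp add: Rs_def)
  next
    case False
    hence "\<not> 0 \<le> 1 - j" "nat (- (1 - j)) = nat (j - 1)" using assms by auto
    thus ?thesis using H by (simp add: Rs_def)
  qed
qed

definition qq :: "nat \<Rightarrow> qpoly poly" where
  "qq n = (\<Sum>i\<in>{0..n-1}. [:Aser $ (n - 1 - i):] * rho (i + 2))"

lemma GHcoeff_qq:
  assumes "j \<ge> 1"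
  shows "GHcoeff j n = poly (qq n) (of_int j) - poly (qq n) (of_int (1 - j))"
proof -
  have "GHcoeff j n = (\<Sum>i=0..n-1. (Gser j - Hser j) $ (i + 2) * Aser $ (n - 1 - i))"
    by (simp add: GHcoeff_def fps_mult_nth)
  also have "\<dots> = (\<Sum>i=0..n-1. Aser $ (n - 1 - i) * (poly (rho (i + 2)) (of_int j) - poly (rho (i + 2)) (of_int (1 - j))))"
    using assms by (simp add: Gser_Rs Hser_Rs rho_poly rr_def mult.commute del: of_int_diff)
  also have "\<dots> = poly (qq n) (of_int j) - poly (qq n) (of_int (1 - j))"
    by (simp add: qq_def poly_sum sum_subtractf algebra_simps del: of_int_diff)
  finally show ?thesis .
qed

section \<open>Antisymmetrization\<close>

fun W :: "nat \<Rightarrow> nat \<Rightarrow> int" where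
  "W 0 i = 0"
| "W (Suc 0) i = (if i = 0 then 1 else 0)"
| "W (Suc (Suc e)) i = W (Suc e) i + (if i = 0 then 0 else W e (i - 1))"

lemma W_nz: "W e i \<noteq> 0 \<Longrightarrow> 2 * i + 1 \<le> e"
proof (induction e i rule: W.induct)
  case (3 e i)
  show ?case
  proof (cases "W (Suc e) i = 0")
    case True
    hence "i \<noteq> 0" "W e (i - 1) \<noteq> 0" using "3.prems" by (auto split: if_splits)
    thus ?thesis using "3.IH"(2) by auto
  next
    case False thus ?thesis using "3.IH"(1) by auto
  qed
qed (auto split: if_splits)

lemma W_top1: "W (Suc (2 * k)) k = 1"
proof (induction k)
  case 0 thus ?case by simp
next
  case (Suc k)
  have z: "W (Suc (Suc (2 * k))) (Suc k) = 0" using W_nz[of "Suc (Suc (2 * k))" "Suc k"] by force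
  have "W (Suc (2 * Suc k)) (Suc k) = W (Suc (Suc (Suc (2 * k)))) (Suc k)" by simp
  also have "\<dots> = W (Suc (Suc (2 * k))) (Suc k) + W (Suc (2 * k)) k" by simp
  finally show ?case using z Suc.IH by simp
qed

lemma W_top2: "W (Suc (Suc (2 * k))) k = int k + 1"
proof (induction k)
  case 0 thus ?case by simp
next
  case (Suc k)
  have "W (Suc (Suc (2 * Suc k))) (Suc k) = W (Suc (Suc (Suc (Suc (2 * k))))) (Suc k)" by simp
  also have "\<dots> = W (Suc (2 * Suc k)) (Suc k) + W (Suc (Suc (2 * k))) k" by simp
  also have "W (Suc (2 * Suc k)) (Suc k) = 1" by (rule W_top1)
  finally show ?case using Suc.IH by simp
qed

definition Wv :: "nat \<Rightarrow> 'a :: comm_ring_1 \<Rightarrow> 'a" where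
  "Wv e y = (\<Sum>i\<le>e. of_int (W e i) * y ^ i)"

lemma Wv_rec: "Wv (Suc (Suc e)) y = Wv (Suc e) y + y * Wv e y"
proof -
  have "Wv (Suc (Suc e)) y = (\<Sum>i\<le>Suc (Suc e). of_int (W (Suc e) i) * y ^ i)
      + (\<Sum>i\<le>Suc (Suc e). of_int (if i = 0 then 0 else W e (i - 1)) * y ^ i)"
    by (simp add: Wv_def sum.distrib algebra_simps)
  also have "(\<Sum>i\<le>Suc (Suc e). of_int (W (Suc e) i) * y ^ i) = Wv (Suc e) y"
  proof -
    have "W (Suc e) (Suc (Suc e)) = 0" using W_nz[of "Suc e" "Suc (Suc e)"] by force
    thus ?thesis by (simp add: Wv_def)
  qed
  also have "(\<Sum>i\<le>Suc (Suc e). of_int (if i = 0 then 0 else W e (i - 1)) * y ^ i)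
      = (\<Sum>i\<le>Suc e. of_int (W e i) * y ^ Suc i)"
    by (subst sum.atMost_Suc_shift) simp
  also have "\<dots> = y * Wv e y"
  proof -
    have "W e (Suc e) = 0" using W_nz[of e "Suc e"] by force
    thus ?thesis by (simp add: Wv_def sum_distrib_left algebra_simps)
  qed
  finally show ?thesis .
qed

lemma Wv_eval: "x ^ e - (1 - x) ^ e = (2 * x - 1) * Wv e (x * (x - 1))"
proof (induction e rule: less_induct)
  case (less e)
  show ?case
  proof (cases e)
    case 0 thus ?thesis by (simp add: Wv_def)
  next
    case (Suc e1)
    show ?thesis
    proof (cases e1)
      case 0 thus ?thesis using Suc by (simp add: Wv_def)
    next
      case (Suc e2)
      have "x ^ Suc (Suc e2) - (1 - x) ^ Suc (Suc e2) =
            (x ^ Suc e2 - (1 - x) ^ Suc e2) + x * (x - 1) * (x ^ e2 - (1 - x) ^ e2)"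
        by (simp add: algebra_simps)
      also have "\<dots> = (2 * x - 1) * Wv (Suc e2) (x * (x - 1)) + x * (x - 1) * ((2 * x - 1) * Wv e2 (x * (x - 1)))"
        using less.IH[of "Suc e2"] less.IH[of e2] \<open>e = Suc e1\<close> Suc by simp
      also have "\<dots> = (2 * x - 1) * Wv (Suc (Suc e2)) (x * (x - 1))"
        by (simp only: Wv_rec algebra_simps)
      finally show ?thesis using \<open>e = Suc e1\<close> Suc by simp
    qed
  qed
qed




lemma GrK_Aser: "GrK (2 * t) (Aser $ t)"
proof -
  consider "t = 0" | "t = 1" | "t \<ge> 2" by linarith
  thus ?thesis
  proof cases
    case 3
    have "GrK (2 * (t - 2) + 3) (mvar (t - 2))" by (rule GrK_mvar)
    thus ?thesis using 3 by (simp add: Aser_nth) (rule GrK_mono, auto)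
  qed (auto simp: Aser_nth)
qed

lemma Gr_qq: assumes n: "n \<ge> 1" shows "Gr (2 * n + 2) (qq n)"
  unfolding qq_def
proof (rule Gr_sum)
  fix i assume i: "i \<in> {0..n-1}"
  have "Gr (2 * (n - 1 - i) + 2 * (i + 2)) ([:Aser $ (n - 1 - i):] * rho (i + 2))"
    by (intro Gr_mult Gr_const GrK_Aser rho_Gr)
  thus "Gr (2 * n + 2) ([:Aser $ (n - 1 - i):] * rho (i + 2))"
    by (rule Gr_mono) (use i n in auto)
qed

definition TT :: "nat \<Rightarrow> nat \<Rightarrow> qpoly" where
  "TT n i = (\<Sum>e\<le>2 * n + 2. coeff (qq n) e * of_int (W e i))"

lemma poly_altdef_N:
  fixes p :: "'a :: comm_semiring_1 poly"
  assumes "degree p \<le> N" shows "poly p x = (\<Sum>i\<le>N. coeff p i * x ^ i)"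
  unfolding poly_altdef
  by (rule sum.mono_neutral_left) (use assms in \<open>auto simp: coeff_eq_0\<close>)

lemma sum_restrict_W:
  fixes g :: "nat \<Rightarrow> 'a :: comm_monoid_add"
  assumes "\<And>i. g i \<noteq> 0 \<Longrightarrow> i \<le> a \<and> i \<le> b"
  shows "(\<Sum>i\<le>a. g i) = (\<Sum>i\<le>b. g i)"
proof -
  have "(\<Sum>i\<le>a. g i) = (\<Sum>i\<in>{..a} \<inter> {..b}. g i)"
    by (rule sum.mono_neutral_right) (use assms in auto)
  also have "\<dots> = (\<Sum>i\<le>b. g i)"
    by (rule sum.mono_neutral_left) (use assms in auto)
  finally show ?thesis .
qed

lemma qq_decomp:
  fixes x :: qpoly
  assumes n: "n \<ge> 1"
  shows "poly (qq n) x - poly (qq n) (1 - x) = (2 * x - 1) * (\<Sum>i\<le>n. TT n i * (x * (x - 1)) ^ i)"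
proof -
  define N where "N = 2 * n + 2"
  define v where "v = x * (x - 1)"
  have dq: "degree (qq n) \<le> N" using Gr_degree[OF Gr_qq[OF n]] N_def by simp
  have "poly (qq n) x - poly (qq n) (1 - x) = (\<Sum>e\<le>N. coeff (qq n) e * (x ^ e - (1 - x) ^ e))"
    by (simp add: poly_altdef_N[OF dq] sum_subtractf algebra_simps)
  also have "\<dots> = (\<Sum>e\<le>N. coeff (qq n) e * ((2 * x - 1) * Wv e v))"
    by (simp add: Wv_eval v_def)
  also have "\<dots> = (\<Sum>e\<le>N. coeff (qq n) e * ((2 * x - 1) * (\<Sum>i\<le>n. of_int (W e i) * v ^ i)))"
  proof (rule sum.cong[OF refl])
    fix e assume e: "e \<in> {..N}"
    have "Wv e v = (\<Sum>i\<le>n. of_int (W e i) * v ^ i)"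
      unfolding Wv_def
    proof (rule sum_restrict_W)
      fix i assume "of_int (W e i) * v ^ i \<noteq> 0"
      hence "W e i \<noteq> 0" by auto
      from W_nz[OF this] e show "i \<le> e \<and> i \<le> n" by (auto simp: N_def)
    qed
    thus "coeff (qq n) e * ((2 * x - 1) * Wv e v) = coeff (qq n) e * ((2 * x - 1) * (\<Sum>i\<le>n. of_int (W e i) * v ^ i))"
      by simp
  qed
  also have "\<dots> = (2 * x - 1) * (\<Sum>i\<le>n. (\<Sum>e\<le>N. coeff (qq n) e * of_int (W e i)) * v ^ i)"
    by (simp add: sum_distrib_left sum_distrib_right algebra_simps sum.swap[of _ "{..N}"])
  finally show ?thesis by (simp add: TT_def N_def v_def)
qed

lemma TT_Gr: assumes "i \<le> n" and n: "n \<ge> 1" shows "GrK (2 * n + 1 - 2 * i) (TT n i)"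
  unfolding TT_def
proof (rule GrK_sum)
  fix e assume e: "e \<in> {..2 * n + 2}"
  show "GrK (2 * n + 1 - 2 * i) (coeff (qq n) e * of_int (W e i))"
  proof (cases "W e i = 0")
    case False
    from W_nz[OF this] have ei: "2 * i + 1 \<le> e" .
    have "GrK (2 * n + 2 - e) (coeff (qq n) e)" by (rule Gr_coeffK[OF Gr_qq[OF n]]) (use e in auto)
    hence "GrK (2 * n + 2 - e + 0) (coeff (qq n) e * of_int (W e i))" by (rule GrK_mult) simp
    thus ?thesis by (rule GrK_mono) (use ei e in auto)
  qed simp
qed




lemma coeff_qq:
  assumes n: "n \<ge> 1" and e: "e \<ge> 2 * n + 1"
  shows "coeff (qq n) e = coeff (rho (n + 1)) e"
proof -
  have "coeff (qq n) e = (\<Sum>i\<in>{0..n-1}. Aser $ (n - 1 - i) * coeff (rho (i + 2)) e)"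
    by (simp add: qq_def coeff_sum)
  also have "{0..n-1} = insert (n - 1) {0..<n-1}" using n by auto
  also have "(\<Sum>i\<in>insert (n - 1) {0..<n-1}. Aser $ (n - 1 - i) * coeff (rho (i + 2)) e)
      = Aser $ 0 * coeff (rho (n + 1)) e + (\<Sum>i\<in>{0..<n-1}. Aser $ (n - 1 - i) * coeff (rho (i + 2)) e)"
    using n by (simp add: sum.insert)
  also have "(\<Sum>i\<in>{0..<n-1}. Aser $ (n - 1 - i) * coeff (rho (i + 2)) e) = 0"
  proof (rule sum.neutral, rule ballI)
    fix i assume i: "i \<in> {0..<n-1}"
    have "degree (rho (i + 2)) < e" using degree_rho[of "i + 2"] i e by auto
    thus "Aser $ (n - 1 - i) * coeff (rho (i + 2)) e = 0" by (simp add: coeff_eq_0)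
  qed
  finally show ?thesis by (simp add: Aser_0)
qed

lemma TT_top:
  assumes n: "n \<ge> 1"
  shows "TT n n = mconst (dd (n + 1) + of_nat (n + 1) * cc (n + 1))"
proof -
  define f where "f e = coeff (qq n) e * of_int (W e n)" for e
  have "{..2 * n + 2} = {..<2 * n + 1} \<union> {2 * n + 1, 2 * n + 2}" by auto
  hence "TT n n = (\<Sum>e\<in>{..<2 * n + 1}. f e) + (\<Sum>e\<in>{2 * n + 1, 2 * n + 2}. f e)"
    by (simp add: TT_def f_def sum.union_disjoint)
  also have "(\<Sum>e\<in>{..<2 * n + 1}. f e) = 0"
  proof (rule sum.neutral, rule ballI)
    fix e assume "e \<in> {..<2 * n + 1}"
    hence "W e n = 0" using W_nz[of e n] by force
    thus "f e = 0" by (simp add: f_def)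
  qed
  also have "(\<Sum>e\<in>{2 * n + 1, 2 * n + 2}. f e) = f (2 * n + 1) + f (2 * n + 2)" by simp
  also have "f (2 * n + 1) = mconst (dd (n + 1))"
  proof -
    have "W (2 * n + 1) n = 1" using W_top1[of n] by simp
    moreover have "coeff (qq n) (2 * n + 1) = coeff (rho (n + 1)) (2 * (n + 1) - 1)"
      using coeff_qq[OF n, of "2 * n + 1"] by simp
    ultimately show ?thesis using top_coeffs[of "n + 1"] by (simp add: f_def)
  qed
  also have "f (2 * n + 2) = mconst (cc (n + 1)) * of_int (int n + 1)"
  proof -
    have "W (2 * n + 2) n = int n + 1" using W_top2[of n] by simp
    moreover have "coeff (qq n) (2 * n + 2) = coeff (rho (n + 1)) (2 * (n + 1))"
      using coeff_qq[OF n, of "2 * n + 2"] by simp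
    ultimately show ?thesis using top_coeffs[of "n + 1"] by (simp add: f_def)
  qed
  finally show ?thesis
    by (simp add: mconst_add mconst_mult mconst_of_nat mult.commute)
qed

lemma lk_mvar_mult_ne:
  assumes "k \<noteq> k'" shows "lk (mvar k * c) (Poly_Mapping.single k' 1) = 0"
proof (rule ccontr)
  assume "lk (mvar k * c) (Poly_Mapping.single k' 1) \<noteq> 0"
  hence "Poly_Mapping.single k' 1 \<in> ks (mvar k * c)" by (simp add: in_keys_iff)
  then obtain b where "Poly_Mapping.single k' (1::nat) = Poly_Mapping.single k 1 + b"
    using keys_mult[of "mvar k" c] by (auto simp: mvar_def)
  hence "lk (Poly_Mapping.single k' (1::nat)) k = lk (Poly_Mapping.single k 1 + b) k" by simp
  thus False using assms by (simp add: lookup_add lookup_single)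
qed

lemma lk_Gr_zero: assumes "GrK d c" "d < phi m" shows "lk c m = 0"
proof (rule ccontr)
  assume "lk c m \<noteq> 0"
  hence "m \<in> ks c" by (simp add: in_keys_iff)
  with assms show False by (auto simp: GrK_def)
qed

lemma phi_mu: "phi (Poly_Mapping.single k 1) = 2 * k + 3" by (rule phi_single)

lemma lk_rho1:
  assumes n: "n \<ge> 1"
  defines "\<mu> \<equiv> Poly_Mapping.single (n - 1) (1::nat)"
  shows "lk (coeff (rho (n + 1)) 1) \<mu> = 1"
proof -
  define N where "N = 2 * n + 2"
  define \<rho> where "\<rho> = rho (n + 1)"
  have G\<rho>: "Gr N \<rho>" using rho_Gr[of "n + 1"] by (simp add: N_def \<rho>_def)
  have "phi \<mu> = 2 * (n - 1) + 3" unfolding \<mu>_def by (rule phi_single)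
  hence pmu: "phi \<mu> = 2 * n + 1" using n by simp
  have z: "lk (coeff \<rho> i) \<mu> = 0" if "i \<ge> 2" for i
  proof (cases "i \<le> N")
    case True
    have "GrK (N - i) (coeff \<rho> i)" by (rule Gr_coeffK[OF G\<rho> True])
    thus ?thesis by (rule lk_Gr_zero) (use that pmu in \<open>auto simp: N_def\<close>)
  next
    case False thus ?thesis using Gr_degree[OF G\<rho>] by (simp add: coeff_eq_0)
  qed
  have L: "lk (coeff (Dlt \<rho>) 0) \<mu> = lk (coeff \<rho> 1) \<mu>"
  proof -
    have "coeff (pcompose \<rho> [:1, 1:]) 0 = (\<Sum>i\<le>N. coeff \<rho> i)"
      using coeff_shift_N[of \<rho> N 0] Gr_degree[OF G\<rho>] by simp
    hence "lk (coeff (Dlt \<rho>) 0) \<mu> = (\<Sum>i\<le>N. lk (coeff \<rho> i) \<mu>) - lk (coeff \<rho> 0) \<mu>"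
      by (simp add: Dlt_def lookup_sum lookup_minus)
    also have "(\<Sum>i\<le>N. lk (coeff \<rho> i) \<mu>) = (\<Sum>i\<in>{0,1}. lk (coeff \<rho> i) \<mu>)"
      by (rule sum.mono_neutral_right) (auto simp: N_def z)
    finally show ?thesis by simp
  qed
  have R: "lk (coeff (piP rho (n + 1)) 0) \<mu> = 1"
  proof -
    have "coeff (piP rho (n + 1)) 0 = (\<Sum>t\<in>{2..n+1}. mvar (t - 2) * coeff (rho (n + 1 - t)) 0)"
      unfolding piP_def coeff_add coeff_minus coeff_X_mult by (simp add: coeff_sum)
    hence "lk (coeff (piP rho (n + 1)) 0) \<mu> = (\<Sum>t\<in>{2..n+1}. lk (mvar (t - 2) * coeff (rho (n + 1 - t)) 0) \<mu>)"
      by (simp only: lookup_sum)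
    also have "\<dots> = (\<Sum>t\<in>{n+1}. lk (mvar (t - 2) * coeff (rho (n + 1 - t)) 0) \<mu>)"
    proof (rule sum.mono_neutral_right)
      show "\<forall>t\<in>{2..n + 1} - {n + 1}. lk (mvar (t - 2) * coeff (rho (n + 1 - t)) 0) \<mu> = 0"
      proof
        fix t assume t: "t \<in> {2..n + 1} - {n + 1}"
        have "t - 2 \<noteq> n - 1" using t n by auto
        thus "lk (mvar (t - 2) * coeff (rho (n + 1 - t)) 0) \<mu> = 0"
          unfolding \<mu>_def by (rule lk_mvar_mult_ne)
      qed
    qed (use n in auto)
    also have "\<dots> = 1" using n by (simp add: rho_0 \<mu>_def mvar_def)
    finally show ?thesis .
  qed
  have "Dlt \<rho> = piP rho (n + 1)" unfolding \<rho>_def by (rule Dlt_rho) simp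
  with L R show ?thesis by (simp add: \<rho>_def)
qed

lemma lk_of_int_right: fixes c :: qpoly shows "lk (c * of_int z) m = of_int z * lk c m"
  by (simp only: mult.commute[of c] mconst_of_int[symmetric] lookup_mconst_mult)

lemma TT_mu:
  assumes n: "n \<ge> 1"
  defines "\<mu> \<equiv> Poly_Mapping.single (n - 1) (1::nat)"
  shows "lk (TT n 0) \<mu> = 1"
proof -
  have "phi \<mu> = 2 * (n - 1) + 3" unfolding \<mu>_def by (rule phi_single)
  hence pmu: "phi \<mu> = 2 * n + 1" using n by simp
  have "lk (TT n 0) \<mu> = (\<Sum>e\<le>2 * n + 2. of_int (W e 0) * lk (coeff (qq n) e) \<mu>)"
    by (simp only: TT_def lookup_sum lk_of_int_right)
  also have "\<dots> = (\<Sum>e\<in>{1}. of_int (W e 0) * lk (coeff (qq n) e) \<mu>)"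
  proof (rule sum.mono_neutral_right)
    show "\<forall>e\<in>{..2 * n + 2} - {1}. of_int (W e 0) * lk (coeff (qq n) e) \<mu> = 0"
    proof
      fix e assume e: "e \<in> {..2 * n + 2} - {1}"
      show "of_int (W e 0) * lk (coeff (qq n) e) \<mu> = 0"
      proof (cases "e = 0")
        case True thus ?thesis by simp
      next
        case False
        have "GrK (2 * n + 2 - e) (coeff (qq n) e)" by (rule Gr_coeffK[OF Gr_qq[OF n]]) (use e in auto)
        hence "lk (coeff (qq n) e) \<mu> = 0" by (rule lk_Gr_zero) (use e False pmu in auto)
        thus ?thesis by simp
      qed
    qed
  qed auto
  also have "\<dots> = lk (coeff (qq n) 1) \<mu>" by simp
  also have "coeff (qq n) 1 = (\<Sum>i\<in>{0..n-1}. Aser $ (n - 1 - i) * coeff (rho (i + 2)) 1)"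
    by (simp add: qq_def coeff_sum)
  also have "lk \<dots> \<mu> = (\<Sum>i\<in>{0..n-1}. lk (Aser $ (n - 1 - i) * coeff (rho (i + 2)) 1) \<mu>)"
    by (simp add: lookup_sum)
  also have "\<dots> = (\<Sum>i\<in>{n-1}. lk (Aser $ (n - 1 - i) * coeff (rho (i + 2)) 1) \<mu>)"
  proof (rule sum.mono_neutral_right)
    show "\<forall>i\<in>{0..n-1} - {n-1}. lk (Aser $ (n - 1 - i) * coeff (rho (i + 2)) 1) \<mu> = 0"
    proof
      fix i assume i: "i \<in> {0..n-1} - {n-1}"
      show "lk (Aser $ (n - 1 - i) * coeff (rho (i + 2)) 1) \<mu> = 0"
      proof (cases "n - 1 - i = 1")
        case True thus ?thesis by (simp add: Aser_nth)
      next
        case False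
        moreover have "n - 1 - i \<noteq> 0" using i by auto
        ultimately have "Aser $ (n - 1 - i) = mvar (n - 1 - i - 2)" by (simp add: Aser_nth)
        thus ?thesis unfolding \<mu>_def by (simp only:) (rule lk_mvar_mult_ne, use i in auto)
      qed
    qed
  qed auto
  also have "\<dots> = lk (coeff (rho (n + 1)) 1) \<mu>" using n by (simp add: Aser_0)
  also have "\<dots> = 1" unfolding \<mu>_def by (rule lk_rho1[OF n])
  finally show ?thesis .
qed



definition SS :: "nat \<Rightarrow> nat \<Rightarrow> qpoly" where
  "SS n i = (if i = 0 then TT n 0 - mvar (n - 1) else if i \<le> n then TT n i else 0)"

lemma phi_single_key:
  assumes k: "k \<in> ks m" and le: "phi m \<le> 2 * k + 3"
  shows "m = Poly_Mapping.single k 1"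
proof -
  have fin: "finite (ks m)" by simp
  have "phi m = lk m k * (2 * k + 3) + (\<Sum>k'\<in>ks m - {k}. lk m k' * (2 * k' + 3))"
    unfolding phi_def using sum.remove[OF fin k] by simp
  moreover have a1: "lk m k \<ge> 1" using k by (simp add: in_keys_iff)
  ultimately have le2: "lk m k * (2 * k + 3) + (\<Sum>k'\<in>ks m - {k}. lk m k' * (2 * k' + 3)) \<le> 2 * k + 3"
    using le by simp
  define A where "A = lk m k * (2 * k + 3)"
  define R where "R = (\<Sum>k'\<in>ks m - {k}. lk m k' * (2 * k' + 3))"
  have "2 * k + 3 \<le> A" using mult_le_mono1[OF a1, of "2 * k + 3"] by (simp add: A_def)
  hence "R = 0" using le2 unfolding A_def[symmetric] R_def[symmetric] by linarith
  hence 2: "(\<Sum>k'\<in>ks m - {k}. lk m k' * (2 * k' + 3)) = 0" by (simp add: R_def)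
  have 1: "lk m k = 1"
  proof (rule ccontr)
    assume "lk m k \<noteq> 1"
    hence "2 \<le> lk m k" using a1 by simp
    hence "2 * (2 * k + 3) \<le> lk m k * (2 * k + 3)" by (rule mult_le_mono1)
    thus False using le2[unfolded A_def[symmetric] R_def[symmetric]] by (simp add: A_def)
  qed
  have "ks m - {k} = {}"
  proof (rule ccontr)
    assume "ks m - {k} \<noteq> {}"
    then obtain k' where k': "k' \<in> ks m - {k}" by blast
    have "lk m k' * (2 * k' + 3) = 0" using 2 k' by simp
    thus False using k' by (simp add: in_keys_iff)
  qed
  hence "ks m = {k}" using k by auto
  show ?thesis
  proof (rule poly_mapping_eqI)
    fix x show "lk m x = lk (Poly_Mapping.single k 1) x"
    proof (cases "x = k")
      case True thus ?thesis using 1 by simp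
    next
      case False
      hence "x \<notin> ks m" using \<open>ks m = {k}\<close> by simp
      hence "lk m x = 0" by (simp add: not_in_keys_iff_lookup_eq_zero)
      thus ?thesis using False by (simp add: lookup_single_not_eq)
    qed
  qed
qed

lemma keys_var_bound:
  assumes "m \<in> ks c" "GrK d c" "k \<in> ks m"
  shows "2 * k + 3 \<le> d"
proof -
  have "lk m k \<ge> 1" using assms(3) by (simp add: in_keys_iff)
  hence "1 * (2 * k + 3) \<le> lk m k * (2 * k + 3)" by (rule mult_le_mono1)
  also have "\<dots> \<le> phi m" by (rule phi_ge[OF assms(3)])
  also have "\<dots> \<le> d" using assms(1,2) by (auto simp: GrK_def)
  finally show ?thesis by simp
qed

lemma mvars_SS:
  assumes n: "n \<ge> 1" and i: "i \<le> n"
  shows "mvars (SS n i) \<subseteq> {..<n-1}"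
proof
  fix k assume "k \<in> mvars (SS n i)"
  then obtain m where m: "m \<in> ks (SS n i)" "k \<in> ks m" by (auto simp: mvars_def)
  show "k \<in> {..<n-1}"
  proof (cases "i = 0")
    case False
    hence "m \<in> ks (TT n i)" using m i by (simp add: SS_def)
    from keys_var_bound[OF this TT_Gr[OF i n] m(2)] False i show ?thesis by auto
  next
    case True
    define \<mu> where "\<mu> = Poly_Mapping.single (n - 1) (1::nat)"
    have m0: "m \<in> ks (TT n 0 - mvar (n - 1))" using m True by (simp add: SS_def)
    have "m \<noteq> \<mu>"
    proof
      assume "m = \<mu>"
      hence "lk (TT n 0 - mvar (n - 1)) m = 0"
        using TT_mu[OF n] by (simp add: \<mu>_def lookup_minus mvar_def)
      with m0 show False by (simp add: in_keys_iff)
    qed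
    hence "lk (mvar (n - 1)) m = 0" by (simp add: mvar_def \<mu>_def lookup_single)
    hence "m \<in> ks (TT n 0)" using m0 by (simp add: in_keys_iff lookup_minus)
    hence "phi m \<le> 2 * n + 1" using TT_Gr[of 0 n] n by (auto simp: GrK_def)
    show ?thesis
    proof (rule ccontr)
      assume "k \<notin> {..<n-1}"
      hence "k \<ge> n - 1" by simp
      have "2 * k + 3 \<le> 2 * n + 1"
        using keys_var_bound[OF \<open>m \<in> ks (TT n 0)\<close> TT_Gr[of 0 n] m(2)] n by simp
      hence "k = n - 1" using \<open>k \<ge> n - 1\<close> n by simp
      hence "phi m \<le> 2 * k + 3" using \<open>phi m \<le> 2 * n + 1\<close> n by simp
      hence "m = \<mu>" using phi_single_key[OF m(2)] \<open>k = n - 1\<close> by (simp add: \<mu>_def)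
      with \<open>m \<noteq> \<mu>\<close> show False ..
    qed
  qed
qed

lemma SS_eq:
  assumes n: "n \<ge> 1" and j: "j \<ge> 1"
  shows "GHcoeff j n = of_int (2*j - 1) *
          (mvar (n-1) + SS n 0 + (\<Sum>i=1..n. SS n i * of_int (j*(j-1)) ^ i))"
proof -
  define x :: qpoly where "x = of_int j"
  have "GHcoeff j n = poly (qq n) x - poly (qq n) (1 - x)"
    using GHcoeff_qq[OF j, of n] by (simp add: x_def)
  also have "\<dots> = (2 * x - 1) * (\<Sum>i\<le>n. TT n i * (x * (x - 1)) ^ i)" by (rule qq_decomp[OF n])
  also have "(\<Sum>i\<le>n. TT n i * (x * (x - 1)) ^ i) = TT n 0 + (\<Sum>i=1..n. TT n i * (x * (x - 1)) ^ i)"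
  proof -
    have "{..n} = insert 0 {1..n}" by auto
    thus ?thesis by (simp add: sum.insert)
  qed
  also have "(\<Sum>i=1..n. TT n i * (x * (x - 1)) ^ i) = (\<Sum>i=1..n. SS n i * of_int (j*(j-1)) ^ i)"
    by (rule sum.cong) (auto simp: SS_def x_def)
  also have "TT n 0 = mvar (n-1) + SS n 0" by (simp add: SS_def)
  also have "2 * x - 1 = of_int (2*j - 1)" by (simp add: x_def)
  finally show ?thesis by (simp add: add.assoc)
qed

lemma SS_spec: assumes n: "n \<ge> 1" shows "S_spec n (SS n)"
  unfolding S_spec_def using mvars_SS[OF n] SS_eq[OF n] by (auto simp: SS_def)

section \<open>Uniqueness\<close>

lemma rat_poly_roots_vj:
  fixes P :: "rat poly"
  assumes "\<And>j::int. j \<ge> 1 \<Longrightarrow> poly P (of_int (j * (j - 1))) = 0"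
  shows "P = 0"
proof (rule ccontr)
  assume "P \<noteq> 0"
  hence fin: "finite {x. poly P x = 0}" by (rule poly_roots_finite)
  define f where "f j = (of_int (j * (j - 1)) :: rat)" for j :: int
  have "f ` {1..} \<subseteq> {x. poly P x = 0}" using assms by (auto simp: f_def)
  hence "finite (f ` {1..})" using fin finite_subset by blast
  moreover have "inj_on f {1..}"
  proof
    fix a b :: int assume ab: "a \<in> {1..}" "b \<in> {1..}" "f a = f b"
    hence "a * (a - 1) = b * (b - 1)" by (simp only: f_def of_int_eq_iff)
    hence "(a - b) * (a + b - 1) = 0" by (simp add: algebra_simps)
    thus "a = b" using ab by auto
  qed
  ultimately have "finite ({1..} :: int set)" using finite_imageD by blast
  thus False using infinite_Ici[of "1::int"] by simp
qed

lemma lk_sum_pow: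
  fixes D :: "nat \<Rightarrow> qpoly"
  shows "lk (\<Sum>i\<le>n. D i * of_int v ^ i) m = poly (\<Sum>i\<le>n. monom (lk (D i) m) i) (of_int v)"
proof -
  have "lk (D i * of_int v ^ i) m = lk (D i) m * of_int v ^ i" for i
  proof -
    have "D i * of_int v ^ i = mconst (of_int v ^ i) * D i"
      by (simp only: mconst_power mconst_of_int mult.commute)
    hence "lk (D i * of_int v ^ i) m = of_int v ^ i * lk (D i) m" by (simp only: lookup_mconst_mult)
    thus ?thesis by (simp only: mult.commute)
  qed
  thus ?thesis by (simp add: lookup_sum poly_sum poly_monom)
qed

lemma S_spec_unique:
  assumes n: "n \<ge> 1" and S1: "S_spec n S1" and S2: "S_spec n S2"
  shows "S1 = S2"
proof
  fix i
  define D where "D i = S1 i - S2 i" for i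
  have key: "(\<Sum>i\<le>n. D i * of_int (j * (j - 1)) ^ i) = 0" if j: "j \<ge> 1" for j :: int
  proof -
    define A where "A = mvar (n-1) + S1 0 + (\<Sum>i=1..n. S1 i * (of_int (j*(j-1)) :: qpoly) ^ i)"
    define B where "B = mvar (n-1) + S2 0 + (\<Sum>i=1..n. S2 i * (of_int (j*(j-1)) :: qpoly) ^ i)"
    have eA: "GHcoeff j n = of_int (2*j-1) * A" using S1 j unfolding S_spec_def A_def by blast
    have eB: "GHcoeff j n = of_int (2*j-1) * B" using S2 j unfolding S_spec_def B_def by blast
    have "of_int (2 * j - 1) * (A - B) = 0"
      by (simp only: right_diff_distrib eA[symmetric] eB[symmetric] diff_self)
    hence "A - B = 0"
      by (rule of_int_mult_cancel) (use j in simp)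
    hence "(mvar (n-1) + S1 0 + (\<Sum>i=1..n. S1 i * of_int (j*(j-1)) ^ i))
          - (mvar (n-1) + S2 0 + (\<Sum>i=1..n. S2 i * of_int (j*(j-1)) ^ i)) = 0"
      by (simp only: A_def B_def)
    hence "D 0 + (\<Sum>i=1..n. D i * of_int (j*(j-1)) ^ i) = 0"
      by (simp add: D_def sum_subtractf algebra_simps)
    moreover have "{..n} = insert 0 {1..n}" by auto
    ultimately show ?thesis by (simp add: sum.insert)
  qed
  show "S1 i = S2 i"
  proof (cases "i \<le> n")
    case False thus ?thesis using S1 S2 by (simp add: S_spec_def)
  next
    case True
    show ?thesis
    proof (rule poly_mapping_eqI)
      fix m
      define P where "P = (\<Sum>i\<le>n. monom (lk (D i) m) i)"
      have "P = 0"
      proof (rule rat_poly_roots_vj)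
        fix j :: int assume "j \<ge> 1"
        have "poly P (of_int (j * (j - 1))) = lk (\<Sum>i\<le>n. D i * of_int (j * (j - 1)) ^ i) m"
          by (simp only: P_def lk_sum_pow)
        also have "\<dots> = 0" using key[OF \<open>j \<ge> 1\<close>] by simp
        finally show "poly P (of_int (j * (j - 1))) = 0" .
      qed
      hence "coeff P i = 0" by simp
      moreover have "coeff P i = lk (D i) m"
        using True by (simp add: P_def coeff_sum coeff_monom)
      ultimately show "lk (S1 i) m = lk (S2 i) m" by (simp add: D_def lookup_minus)
    qed
  qed
qed

lemma Spoly_eq: assumes n: "n \<ge> 1" shows "Spoly n = SS n"
  unfolding Spoly_def
proof (rule the_equality)
  show "S_spec n (SS n)" by (rule SS_spec[OF n])
  fix S assume "S_spec n S"
  thus "S = SS n" using S_spec_unique[OF n _ SS_spec[OF n]] by blast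
qed



section \<open>Variables and degrees\<close>

definition tdeg :: "(nat \<Rightarrow>\<^sub>0 nat) \<Rightarrow> nat" where
  "tdeg m = (\<Sum>k\<in>ks m. lk m k)"

lemma tdeg_add: "tdeg (a + b) = tdeg a + tdeg b"
  unfolding tdeg_def by (rule setsum_keys_plus_distrib) auto

lemma tdeg_0[simp]: "tdeg 0 = 0" by (simp add: tdeg_def)

definition DegLe :: "nat \<Rightarrow> qpoly \<Rightarrow> bool" where
  "DegLe d p \<longleftrightarrow> (\<forall>m\<in>ks p. tdeg m \<le> d)"

lemma DegLe_mono: "DegLe d p \<Longrightarrow> d \<le> d' \<Longrightarrow> DegLe d' p" by (auto simp: DegLe_def)
lemma DegLe_0[simp]: "DegLe d 0" by (simp add: DegLe_def)
lemma DegLe_add: "DegLe d a \<Longrightarrow> DegLe d b \<Longrightarrow> DegLe d (a + b)"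
  using keys_add[of a b] by (auto simp: DegLe_def)
lemma DegLe_uminus: "DegLe d a \<Longrightarrow> DegLe d (- a)" by (simp add: DegLe_def)
lemma DegLe_diff: "DegLe d a \<Longrightarrow> DegLe d b \<Longrightarrow> DegLe d (a - b)"
  by (simp only: diff_conv_add_uminus DegLe_add DegLe_uminus)
lemma DegLe_mult: assumes "DegLe d a" "DegLe d' b" shows "DegLe (d + d') (a * b)"
  unfolding DegLe_def
proof
  fix m assume "m \<in> ks (a * b)"
  then obtain m1 m2 where "m = m1 + m2" "m1 \<in> ks a" "m2 \<in> ks b"
    using keys_mult[of a b] by blast
  with assms show "tdeg m \<le> d + d'" by (auto simp: DegLe_def tdeg_add intro: add_mono)
qed
lemma DegLe_sum: "(\<And>i. i \<in> A \<Longrightarrow> DegLe d (f i)) \<Longrightarrow> DegLe d (sum f A)"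
  by (induction A rule: infinite_finite_induct) (auto intro: DegLe_add)
lemma DegLe_mconst[simp]: "DegLe d (mconst c)"
  using keys_mconst[of c] by (auto simp: DegLe_def)
lemma DegLe_one[simp]: "DegLe d 1" by (simp add: DegLe_def)
lemma DegLe_of_nat[simp]: "DegLe d (of_nat n)" by (metis DegLe_mconst mconst_of_nat)
lemma DegLe_numeral[simp]: "DegLe d (numeral n)"
  by (metis DegLe_of_nat of_nat_numeral)
lemma DegLe_mvar: "DegLe 1 (mvar k)"
  by (simp add: DegLe_def mvar_def tdeg_def)
lemma DegLe_power: "DegLe d a \<Longrightarrow> DegLe (n * d) (a ^ n)"
proof (induction n)
  case (Suc n)
  hence "DegLe (d + n * d) (a * a ^ n)" by (intro DegLe_mult) auto
  thus ?case by simp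
qed simp
lemma DegLe_prod: "(\<And>i. i \<in> A \<Longrightarrow> DegLe (d i) (f i)) \<Longrightarrow> DegLe (\<Sum>i\<in>A. d i) (prod f A)"
proof (induction A rule: infinite_finite_induct)
  case (insert x F)
  hence "DegLe (d x + (\<Sum>i\<in>F. d i)) (f x * prod f F)" by (intro DegLe_mult) auto
  thus ?case using insert by simp
qed simp_all

lemma mvars_iff: "mvars p \<subseteq> B \<longleftrightarrow> (\<forall>m\<in>ks p. ks m \<subseteq> B)"
  by (auto simp: mvars_def)

lemma mvars_0[simp]: "mvars 0 = {}" by (simp add: mvars_def)
lemma mvars_add: "mvars (a + b) \<subseteq> mvars a \<union> mvars b"
  using keys_add[of a b] by (auto simp: mvars_def)
lemma mvars_uminus[simp]: "mvars (- a) = mvars a" by (simp add: mvars_def)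
lemma mvars_diff: "mvars (a - b) \<subseteq> mvars a \<union> mvars b"
  using mvars_add[of a "- b"] by simp
lemma mvars_mult: "mvars (a * b) \<subseteq> mvars a \<union> mvars b"
proof
  fix k assume "k \<in> mvars (a * b)"
  then obtain m where m: "m \<in> ks (a * b)" "k \<in> ks m" by (auto simp: mvars_def)
  then obtain m1 m2 where "m = m1 + m2" "m1 \<in> ks a" "m2 \<in> ks b"
    using keys_mult[of a b] by blast
  with m(2) keys_add[of m1 m2] show "k \<in> mvars a \<union> mvars b" by (auto simp: mvars_def)
qed
lemma mvars_sum: "mvars (sum f A) \<subseteq> (\<Union>i\<in>A. mvars (f i))"
proof (induction A rule: infinite_finite_induct)
  case (insert x F)
  thus ?case using mvars_add[of "f x" "sum f F"] by auto
qed auto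
lemma mvars_prod: "mvars (prod f A) \<subseteq> (\<Union>i\<in>A. mvars (f i))"
proof (induction A rule: infinite_finite_induct)
  case (insert x F)
  thus ?case using mvars_mult[of "f x" "prod f F"] by auto
qed (auto simp: mvars_def)
lemma mvars_power: "mvars (a ^ n) \<subseteq> mvars a"
proof (induction n)
  case (Suc n)
  thus ?case using mvars_mult[of a "a ^ n"] by auto
qed (simp add: mvars_def)
lemma mvars_mconst[simp]: "mvars (mconst c) = {}"
  using keys_mconst[of c] by (auto simp: mvars_def)
lemma mvars_of_nat[simp]: "mvars (of_nat n) = {}" by (metis mvars_mconst mconst_of_nat)
lemma mvars_numeral[simp]: "mvars (numeral n) = {}" by (metis mvars_of_nat of_nat_numeral)
lemma mvars_mvar: "mvars (mvar k) = {k}" by (simp add: mvars_def mvar_def)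

section \<open>Substitution\<close>

definition dg :: "(nat \<Rightarrow>\<^sub>0 nat) \<Rightarrow> nat" where
  "dg m = (\<Sum>k\<in>ks m. lk m k * (k + 1))"

lemma phi_dg: "phi m = 2 * dg m + tdeg m"
  by (simp add: phi_def dg_def tdeg_def sum_distrib_left sum.distrib[symmetric] algebra_simps)

lemma dg_bound: assumes "phi m \<le> 2 * D + 1" shows "dg m \<le> D"
  using assms by (simp add: phi_dg)

lemma meval_vars:
  assumes "\<And>k. k \<in> mvars p \<Longrightarrow> mvars (f k) \<subseteq> B"
  shows "mvars (meval f p) \<subseteq> B"
proof -
  have "mvars (mconst (lk p m) * (\<Prod>k\<in>ks m. f k ^ lk m k)) \<subseteq> B" if m: "m \<in> ks p" for m
  proof -
    have "mvars (\<Prod>k\<in>ks m. f k ^ lk m k) \<subseteq> B"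
    proof -
      have "mvars (f k ^ lk m k) \<subseteq> B" if "k \<in> ks m" for k
      proof -
        have "k \<in> mvars p" using m that by (auto simp: mvars_def)
        thus ?thesis using mvars_power[of "f k" "lk m k"] assms[of k] by blast
      qed
      thus ?thesis using mvars_prod[of "\<lambda>k. f k ^ lk m k" "ks m"] by blast
    qed
    thus ?thesis using mvars_mult[of "mconst (lk p m)"] by auto
  qed
  thus ?thesis unfolding meval_def using mvars_sum by blast
qed

lemma meval_deg:
  assumes f: "\<And>k. DegLe (k + 1) (f k)" and p: "\<And>m. m \<in> ks p \<Longrightarrow> dg m \<le> D"
  shows "DegLe D (meval f p)"
  unfolding meval_def
proof (rule DegLe_sum)
  fix m assume m: "m \<in> ks p"
  have "DegLe (\<Sum>k\<in>ks m. lk m k * (k + 1)) (\<Prod>k\<in>ks m. f k ^ lk m k)"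
    by (rule DegLe_prod) (rule DegLe_power[OF f])
  hence "DegLe (0 + dg m) (mconst (lk p m) * (\<Prod>k\<in>ks m. f k ^ lk m k))"
    unfolding dg_def by (intro DegLe_mult) auto
  thus "DegLe D (mconst (lk p m) * (\<Prod>k\<in>ks m. f k ^ lk m k))"
    by (rule DegLe_mono) (use p[OF m] in simp)
qed

lemma meval_mconst: "meval f (mconst c) = mconst c"
  by (cases "c = 0") (auto simp: meval_def mconst_def)



definition dmon :: "(nat \<Rightarrow>\<^sub>0 nat) \<Rightarrow> qpoly" where
  "dmon m = (\<Sum>k\<in>ks m. of_nat (lk m k) * mvar (Suc k) * mvar k ^ (lk m k - 1) *
          (\<Prod>k'\<in>ks m - {k}. mvar k' ^ lk m k'))"

lemma mderiv_dmon: "mderiv p = (\<Sum>m\<in>ks p. mconst (lk p m) * dmon m)"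
  by (simp add: mderiv_def dmon_def)

lemma dmon_deg: "DegLe (tdeg m) (dmon m)"
  unfolding dmon_def
proof (rule DegLe_sum)
  fix k assume k: "k \<in> ks m"
  have fin: "finite (ks m)" by simp
  have t: "tdeg m = lk m k + (\<Sum>k'\<in>ks m - {k}. lk m k')"
    unfolding tdeg_def using sum.remove[OF fin k] by simp
  have l1: "lk m k \<ge> 1" using k by (simp add: in_keys_iff)
  have "DegLe (0 + 1 + (lk m k - 1) * 1 + (\<Sum>k'\<in>ks m - {k}. lk m k' * 1))
     (of_nat (lk m k) * mvar (Suc k) * mvar k ^ (lk m k - 1) * (\<Prod>k'\<in>ks m - {k}. mvar k' ^ lk m k'))"
    by (intro DegLe_mult DegLe_mvar DegLe_power DegLe_prod DegLe_of_nat)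
  thus "DegLe (tdeg m) (of_nat (lk m k) * mvar (Suc k) * mvar k ^ (lk m k - 1) * (\<Prod>k'\<in>ks m - {k}. mvar k' ^ lk m k'))"
    using t l1 by simp
qed

lemma dmon_vars:
  assumes "ks m \<subseteq> {..<b}" shows "mvars (dmon m) \<subseteq> {..<Suc b}"
  unfolding dmon_def
proof (rule order.trans[OF mvars_sum], rule UN_least)
  fix k assume k: "k \<in> ks m"
  let ?t = "of_nat (lk m k) * mvar (Suc k) * mvar k ^ (lk m k - 1) * (\<Prod>k'\<in>ks m - {k}. mvar k' ^ lk m k')"
  have a1: "mvars (of_nat (lk m k) * mvar (Suc k) :: qpoly) \<subseteq> {Suc k}"
    using mvars_mult[of "of_nat (lk m k)" "mvar (Suc k)"] by (simp add: mvars_mvar)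
  have a2: "mvars (mvar k ^ (lk m k - 1)) \<subseteq> {k}" using mvars_power[of "mvar k"] by (simp add: mvars_mvar)
  have a3: "mvars (\<Prod>k'\<in>ks m - {k}. mvar k' ^ lk m k') \<subseteq> ks m"
  proof -
    have "mvars (mvar k' ^ lk m k') \<subseteq> {k'}" for k' using mvars_power[of "mvar k'"] by (simp add: mvars_mvar)
    thus ?thesis using mvars_prod[of "\<lambda>k'. mvar k' ^ lk m k'" "ks m - {k}"] by blast
  qed
  have "mvars (of_nat (lk m k) * mvar (Suc k) * mvar k ^ (lk m k - 1)) \<subseteq> {Suc k} \<union> {k}"
    using mvars_mult[of "of_nat (lk m k) * mvar (Suc k)" "mvar k ^ (lk m k - 1)"] a1 a2 by blast
  hence "mvars ?t \<subseteq> {Suc k} \<union> {k} \<union> ks m"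
    using mvars_mult[of "of_nat (lk m k) * mvar (Suc k) * mvar k ^ (lk m k - 1)"] a3 by blast
  also have "\<dots> \<subseteq> {..<Suc b}" using assms k by auto
  finally show "mvars ?t \<subseteq> {..<Suc b}" .
qed

lemma mderiv_deg: "DegLe d p \<Longrightarrow> DegLe d (mderiv p)"
  unfolding mderiv_dmon
proof (rule DegLe_sum)
  fix m assume "DegLe d p" "m \<in> ks p"
  hence "tdeg m \<le> d" by (simp add: DegLe_def)
  have "DegLe (0 + tdeg m) (mconst (lk p m) * dmon m)" by (intro DegLe_mult dmon_deg) simp
  thus "DegLe d (mconst (lk p m) * dmon m)" by (rule DegLe_mono) (use \<open>tdeg m \<le> d\<close> in simp)
qed

lemma mvars_mconst_mult: "mvars (mconst c * a) \<subseteq> mvars a"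
  using mvars_mult[of "mconst c" a] by simp

lemma mderiv_vars: assumes "mvars p \<subseteq> {..<b}" shows "mvars (mderiv p) \<subseteq> {..<Suc b}"
  unfolding mderiv_dmon
proof (rule order.trans[OF mvars_sum], rule UN_least)
  fix m assume "m \<in> ks p"
  hence "ks m \<subseteq> {..<b}" using assms by (auto simp: mvars_def)
  thus "mvars (mconst (lk p m) * dmon m) \<subseteq> {..<Suc b}"
    using mvars_mconst_mult dmon_vars by blast
qed

lemma mderiv_lead:
  assumes "mvars (p - mvar b) \<subseteq> {..<b}"
  shows "mvars (mderiv p - mvar (Suc b)) \<subseteq> {..<Suc b}"
proof -
  define \<mu> where "\<mu> = Poly_Mapping.single b (1::nat)"
  have "\<mu> \<notin> ks (p - mvar b)"
  proof
    assume "\<mu> \<in> ks (p - mvar b)"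
    moreover have "b \<in> ks \<mu>" by (simp add: \<mu>_def)
    ultimately have "b \<in> mvars (p - mvar b)" unfolding mvars_def by blast
    with assms show False by auto
  qed
  hence "lk (p - mvar b) \<mu> = 0" by (simp add: in_keys_iff)
  hence lpmu: "lk p \<mu> = 1" by (simp add: lookup_minus mvar_def \<mu>_def)
  hence mu: "\<mu> \<in> ks p" by (simp add: in_keys_iff)
  have fin: "finite (ks p)" by simp
  have "mderiv p = mconst (lk p \<mu>) * dmon \<mu> + (\<Sum>m\<in>ks p - {\<mu>}. mconst (lk p m) * dmon m)"
    unfolding mderiv_dmon using sum.remove[OF fin mu] by simp
  also have "mconst (lk p \<mu>) * dmon \<mu> = mvar (Suc b)"
    unfolding lpmu mconst_1 mult_1_left by (simp add: dmon_def \<mu>_def)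
  finally have "mderiv p - mvar (Suc b) = (\<Sum>m\<in>ks p - {\<mu>}. mconst (lk p m) * dmon m)" by simp
  also have "mvars \<dots> \<subseteq> {..<Suc b}"
  proof (rule order.trans[OF mvars_sum], rule UN_least)
    fix m assume m: "m \<in> ks p - {\<mu>}"
    have mb: "mvar b = Poly_Mapping.single \<mu> 1" by (simp add: mvar_def \<mu>_def)
    have "\<mu> \<noteq> m" using m by auto
    hence "lk (mvar b) m = 0" unfolding mb by (rule lookup_single_not_eq)
    hence "m \<in> ks (p - mvar b)" using m by (simp add: in_keys_iff lookup_minus)
    hence "ks m \<subseteq> {..<b}" using assms by (auto simp: mvars_def)
    thus "mvars (mconst (lk p m) * dmon m) \<subseteq> {..<Suc b}"
      using mvars_mconst_mult dmon_vars by blast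
  qed
  finally show ?thesis .
qed

lemma Ppoly_props:
  "mvars (Ppoly (Suc j)) \<subseteq> {..<Suc j} \<and> DegLe (Suc j) (Ppoly (Suc j)) \<and>
   mvars (Ppoly (Suc j) - mvar j) \<subseteq> {..<j}"
proof (induction j)
  case 0 thus ?case using DegLe_mvar[of 0] by (simp add: mvars_mvar)
next
  case (Suc j)
  let ?P = "Ppoly (Suc j)"
  have P: "Ppoly (Suc (Suc j)) = mderiv ?P - 3 * mvar 0 * ?P" by simp
  have v3: "mvars (3 * mvar 0 * ?P) \<subseteq> {..<Suc j}"
    using mvars_mult[of "3 * mvar 0" ?P] mvars_mult[of 3 "mvar 0"] Suc.IH by (auto simp: mvars_mvar)
  have "mvars (mderiv ?P) \<subseteq> {..<Suc (Suc j)}" using mderiv_vars Suc.IH by blast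
  hence A: "mvars (Ppoly (Suc (Suc j))) \<subseteq> {..<Suc (Suc j)}"
  proof -
    have "mvars (Ppoly (Suc (Suc j))) \<subseteq> mvars (mderiv ?P) \<union> mvars (3 * mvar 0 * ?P)"
      unfolding P by (rule mvars_diff)
    also have "\<dots> \<subseteq> {..<Suc (Suc j)}"
    proof (rule Un_least)
      show "mvars (3 * mvar 0 * ?P) \<subseteq> {..<Suc (Suc j)}" using v3 by (rule order.trans) auto
    qed fact
    finally show ?thesis .
  qed
  have "DegLe (0 + 1 + Suc j) (3 * mvar 0 * ?P)"
    by (rule DegLe_mult[OF DegLe_mult[OF DegLe_numeral DegLe_mvar]]) (use Suc.IH in blast)
  moreover have "DegLe (Suc j) (mderiv ?P)" using Suc.IH mderiv_deg by blast
  ultimately have B: "DegLe (Suc (Suc j)) (Ppoly (Suc (Suc j)))"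
    unfolding P by (intro DegLe_diff) (auto elim: DegLe_mono)
  have "mvars (mderiv ?P - mvar (Suc j)) \<subseteq> {..<Suc j}"
    by (rule mderiv_lead) (use Suc.IH in auto)
  hence C: "mvars (Ppoly (Suc (Suc j)) - mvar (Suc j)) \<subseteq> {..<Suc j}"
    unfolding P using mvars_diff[of "mderiv ?P - mvar (Suc j)" "3 * mvar 0 * ?P"] v3
    by (auto simp: algebra_simps)
  show ?case using A B C by blast
qed



lemma length_Clist[simp]: "length (Clist m) = m"
  by (induction m) auto

lemma Clist_nth: "k < m \<Longrightarrow> Clist m ! k = Chat (Suc k)"
proof (induction m)
  case 0 thus ?case by simp
next
  case (Suc m)
  show ?case
  proof (cases "k < m")
    case True thus ?thesis using Suc by (simp add: nth_append)
  next
    case False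
    hence "k = m" using Suc.prems by simp
    thus ?thesis by (simp add: Chat_def)
  qed
qed

lemma Chat_Cstep: "n \<ge> 1 \<Longrightarrow> Chat n = Cstep n (Clist (n - 1))"
  by (cases n) (auto simp: Chat_def nth_append)

lemma subst_Clist: "subst_list (Clist (n - 1)) k = (if k < n - 1 then Chat (Suc k) else 0)"
  by (simp add: subst_list_def Clist_nth)

definition cn :: "nat \<Rightarrow> rat" where
  "cn n = (-1) ^ (n - 1) / fact (n - 1)"

lemma R3_aux:
  fixes F P S y z :: rat
  assumes "F \<noteq> 0" "P \<noteq> 0" "y \<noteq> 0" "z \<noteq> 0" "z = y + 1"
  shows "6 * P * (S * (2 * z - 5) / (3 * (2 * (2 * P)) * (y * F)) + z * (S / (2 * (2 * P) * (z * (y * F))))) = S / F"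
proof -
  have "6 * P * (S * (2 * z - 5) / (3 * (2 * (2 * P)) * (y * F)) + z * (S / (2 * (2 * P) * (z * (y * F)))))
      = S * ((2 * z - 5) + 3) / (2 * y * F)"
    using assms(1-4) by (simp add: field_simps)
  also have "\<dots> = S * (2 * y) / (2 * y * F)" unfolding assms(5) by (simp add: algebra_simps)
  also have "\<dots> = S / F" using assms(1-4) by (simp add: field_simps)
  finally show ?thesis .
qed

lemma R3: assumes "n \<ge> 1"
  shows "of_nat (3 * 2 ^ n) * (dd (n + 1) + of_nat (n + 1) * cc (n + 1)) = cn n"
proof -
  obtain m where n: "n = Suc m" using assms by (cases n) auto
  define S :: rat where "S = (-1) ^ m"
  define P :: rat where "P = 2 ^ m"
  define F :: rat where "F = fact m"
  define y :: rat where "y = of_nat (Suc m)"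
  define z :: rat where "z = of_nat (Suc (Suc m))"
  have e1: "dd (n + 1) = S * (2 * z - 5) / (3 * (2 * (2 * P)) * (y * F))"
    unfolding dd_def n z_def y_def S_def P_def F_def by (simp only: fact_Suc power_Suc of_nat_mult diff_Suc_1 Suc_eq_plus1[symmetric])
  have e2: "cc (n + 1) = S / (2 * (2 * P) * (z * (y * F)))"
    unfolding cc_def n z_def y_def S_def P_def F_def by (simp only: fact_Suc power_Suc of_nat_mult Suc_eq_plus1[symmetric])
  have e3: "cn n = S / F" unfolding cn_def n by (simp add: S_def F_def)
  have e4: "of_nat (3 * 2 ^ n) = 6 * P" unfolding n by (simp add: P_def)
  have e5: "of_nat (n + 1) = z" unfolding n by (simp add: z_def)
  show ?thesis unfolding e1 e2 e3 e4 e5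
    by (rule R3_aux) (auto simp: F_def P_def y_def z_def)
qed

lemma mtotal_degree_le: "DegLe d p \<Longrightarrow> mtotal_degree p \<le> d"
  unfolding mtotal_degree_def DegLe_def tdeg_def
  by (subst Max_le_iff) auto

lemma GrK_SS0: assumes n: "n \<ge> 1" shows "GrK (2 * n + 1) (SS n 0)"
proof -
  have e: "2 * (n - 1) + 3 = 2 * n + 1" using n by simp
  have "GrK (2 * n + 1) (mvar (n - 1))" using GrK_mvar[of "n - 1", unfolded e] .
  thus ?thesis unfolding SS_def using TT_Gr[of 0 n] n by (simp add: GrK_diff)
qed

lemma GrK_SSi: assumes n: "n \<ge> 1" and i: "1 \<le> i" "i \<le> n" shows "GrK (2 * (n - i) + 1) (SS n i)"
proof -
  have "2 * n + 1 - 2 * i = 2 * (n - i) + 1" using i by simp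
  thus ?thesis using TT_Gr[of i n] n i by (simp add: SS_def)
qed

lemma main:
  assumes "n \<ge> 1"
  shows "\<exists>F. mvars F \<subseteq> {..<n-1} \<and> DegLe n F \<and> Chat n = F + mconst (cn n) * mvar (n - 1)"
  using assms
proof (induction n rule: less_induct)
  case (less n)
  have n: "n \<ge> 1" by (rule less.prems)
  have IH': "mvars (Chat k) \<subseteq> {..<k} \<and> DegLe k (Chat k)" if k: "1 \<le> k" "k < n" for k
  proof -
    obtain F where F: "mvars F \<subseteq> {..<k-1}" "DegLe k F" "Chat k = F + mconst (cn k) * mvar (k - 1)"
      using less.IH[OF k(2) k(1)] by blast
    have "mvars (mconst (cn k) * mvar (k - 1)) \<subseteq> {..<k}"
      using mvars_mconst_mult[of "cn k" "mvar (k - 1)"] k by (auto simp: mvars_mvar)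
    moreover have "mvars F \<subseteq> {..<k}" using F(1) by auto
    ultimately have "mvars (Chat k) \<subseteq> {..<k}" unfolding F(3) using mvars_add by blast
    moreover have "DegLe k (mconst (cn k) * mvar (k - 1))"
      using DegLe_mult[OF DegLe_mconst DegLe_mvar, of 0 "cn k" "k - 1"] k by (auto elim: DegLe_mono)
    hence "DegLe k (Chat k)" unfolding F(3) using F(2) by (intro DegLe_add)
    ultimately show ?thesis by blast
  qed
  define f where "f = subst_list (Clist (n - 1))"
  have fk: "f k = (if k < n - 1 then Chat (Suc k) else 0)" for k unfolding f_def by (rule subst_Clist)
  have fdeg: "DegLe (k + 1) (f k)" for k
    using IH'[of "Suc k"] by (auto simp: fk)
  have fvars: "mvars (f k) \<subseteq> {..<n-1}" if "k \<in> mvars (SS n i)" "i \<le> n" for k i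
  proof -
    have k: "k < n - 1" using mvars_SS[OF n that(2)] that(1) by auto
    hence "mvars (Chat (Suc k)) \<subseteq> {..<Suc k}" using IH'[of "Suc k"] by simp
    moreover have "{..<Suc k} \<subseteq> {..<n-1}" using k by auto
    ultimately have "mvars (Chat (Suc k)) \<subseteq> {..<n-1}" by (rule order.trans)
    moreover have "f k = Chat (Suc k)" using k by (simp add: fk)
    ultimately show ?thesis by simp
  qed
  define E where "E i = meval f (SS n i)" for i
  have Evars: "mvars (E i) \<subseteq> {..<n-1}" if "i \<le> n" for i
    unfolding E_def by (rule meval_vars) (rule fvars[OF _ that])
  have E0deg: "DegLe n (E 0)"
    unfolding E_def
  proof (rule meval_deg[OF fdeg])
    fix m assume "m \<in> ks (SS n 0)"
    hence "phi m \<le> 2 * n + 1" using GrK_SS0[OF n] by (auto simp: GrK_def)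
    thus "dg m \<le> n" by (rule dg_bound)
  qed
  have Eideg: "DegLe (n - i) (E i)" if i: "1 \<le> i" "i \<le> n" for i
    unfolding E_def
  proof (rule meval_deg[OF fdeg])
    fix m assume "m \<in> ks (SS n i)"
    hence "phi m \<le> 2 * (n - i) + 1" using GrK_SSi[OF n i] by (auto simp: GrK_def)
    thus "dg m \<le> n - i" by (rule dg_bound)
  qed
  define tv where "tv = dd (n + 1) + of_nat (n + 1) * cc (n + 1)"
  have En: "E n = mconst tv"
    using n by (simp add: E_def SS_def TT_top tv_def meval_mconst)
  obtain j where nj: "n = Suc j" using n by (cases n) auto
  define Q where "Q = Ppoly n - mvar (n - 1)"
  have PQ: "Ppoly n = mvar (n - 1) + Q" by (simp add: Q_def)
  have Qv: "mvars Q \<subseteq> {..<n-1}" and Qd: "DegLe n Q" and Pv: "\<And>i. i \<ge> 1 \<Longrightarrow> mvars (Ppoly i) \<subseteq> {..<i}"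
    and Pd: "\<And>i. i \<ge> 1 \<Longrightarrow> DegLe i (Ppoly i)"
  proof -
    show "mvars Q \<subseteq> {..<n-1}" using Ppoly_props[of j] by (simp add: Q_def nj)
    show "DegLe n Q" unfolding Q_def using Ppoly_props[of j] DegLe_mvar[of "n - 1"] nj
      by (intro DegLe_diff) (auto elim: DegLe_mono)
    fix i :: nat assume "i \<ge> 1"
    then obtain i' where "i = Suc i'" by (cases i) auto
    thus "mvars (Ppoly i) \<subseteq> {..<i}" "DegLe i (Ppoly i)" using Ppoly_props[of i'] by auto
  qed
  have cn: "of_nat (3 * 2 ^ n) * mconst tv = mconst (cn n)"
    using R3[OF n] by (simp add: tv_def mconst_of_nat[symmetric] mconst_mult[symmetric])
  define F where "F = - E 0 + (\<Sum>i=1..n-1. of_nat (3 * 2 ^ i) * E i * Ppoly i) + mconst (cn n) * Q"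
  have Ch: "Chat n = - E 0 + (\<Sum>i=1..n. of_nat (3 * 2 ^ i) * E i * Ppoly i)"
    using n by (simp add: Chat_Cstep Cstep_def E_def f_def Spoly_eq)
  have "{1..n} = insert n {1..n-1}" using n by auto
  hence "(\<Sum>i=1..n. of_nat (3 * 2 ^ i) * E i * Ppoly i) =
      of_nat (3 * 2 ^ n) * E n * Ppoly n + (\<Sum>i=1..n-1. of_nat (3 * 2 ^ i) * E i * Ppoly i)"
    using n by (simp add: sum.insert)
  also have "of_nat (3 * 2 ^ n) * E n * Ppoly n = mconst (cn n) * Q + mconst (cn n) * mvar (n - 1)"
    unfolding En PQ cn[symmetric] by (simp add: algebra_simps)
  finally have "Chat n = F + mconst (cn n) * mvar (n - 1)" unfolding Ch F_def by (simp add: algebra_simps)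
  moreover have "mvars F \<subseteq> {..<n-1}"
  proof -
    have "mvars (of_nat (3 * 2 ^ i) * E i * Ppoly i) \<subseteq> {..<n-1}" if "i \<in> {1..n-1}" for i
    proof -
      have "i \<le> n" using that by auto
      hence "mvars (E i) \<subseteq> {..<n-1}" by (rule Evars)
      moreover have "mvars (Ppoly i) \<subseteq> {..<n-1}" using Pv[of i] that by auto
      ultimately show ?thesis
        using mvars_mult[of "of_nat (3 * 2 ^ i) * E i" "Ppoly i"] mvars_mult[of "of_nat (3 * 2 ^ i)" "E i"]
          mvars_of_nat[of "3 * 2 ^ i"] by blast
    qed
    hence "mvars (\<Sum>i=1..n-1. of_nat (3 * 2 ^ i) * E i * Ppoly i) \<subseteq> {..<n-1}"
      using mvars_sum[of "\<lambda>i. of_nat (3 * 2 ^ i) * E i * Ppoly i" "{1..n-1}"] by blast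
    moreover have "mvars (mconst (cn n) * Q) \<subseteq> {..<n-1}" using mvars_mconst_mult Qv by blast
    moreover have "mvars (- E 0) \<subseteq> {..<n-1}" using Evars[of 0] by simp
    ultimately show ?thesis unfolding F_def using mvars_add by blast
  qed
  moreover have "DegLe n F"
  proof -
    have "DegLe n (of_nat (3 * 2 ^ i) * E i * Ppoly i)" if "i \<in> {1..n-1}" for i
    proof -
      have "DegLe (0 + (n - i) + i) (of_nat (3 * 2 ^ i) * E i * Ppoly i)"
        using that by (intro DegLe_mult DegLe_of_nat Eideg Pd) auto
      moreover have "0 + (n - i) + i = n" using that by auto
      ultimately show ?thesis by simp
    qed
    hence "DegLe n (\<Sum>i=1..n-1. of_nat (3 * 2 ^ i) * E i * Ppoly i)" by (intro DegLe_sum)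
    moreover have "DegLe (0 + n) (mconst (cn n) * Q)" by (intro DegLe_mult DegLe_mconst Qd)
    ultimately show ?thesis unfolding F_def using E0deg by (intro DegLe_add DegLe_uminus) auto
  qed
  ultimately show ?case by blast
qed

theorem proposition4p4:
  fixes n :: nat
  assumes "n \<ge> 1"
  shows "\<exists>F. mvars F \<subseteq> {..<n-1} \<and> mtotal_degree F \<le> n \<and>
           Chat n = F + mconst ((-1) ^ (n-1) / fact (n-1)) * mvar (n-1)"
  using main[OF assms] mtotal_degree_le unfolding cn_def by blast


end
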